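(* Let $\alpha\in\Phi_+$ and, for each $s\in\mathbb{F}_q^\times$, let $\lambda_{\alpha,s}$ be any linear character of $V_\alpha$ with $\lambda_{\alpha,s}|_{X_\alpha}=\varphi_{\alpha,s}$ and $X_\gamma\subseteq\ker(\lambda_{\alpha,s})$ for all $\gamma\in\Phi_+$ with $\operatorname{ht}(\gamma)>\operatorname{ht}(\alpha)$ (such characters exist). Then the induced characters $\mu_{\alpha,s}:=\lambda_{\alpha,s}^U$, $s\in\mathbb{F}_q^\times$, are $q-1$ pairwise distinct irreducible characters of $U$, and $\mu_{\alpha,s}|_{X_\alpha}=\mu_{\alpha,s}(1)\cdot\varphi_{\alpha,s}$.
   Context: $q$ is a power of a prime $p$. $\Phi$ is a root system of type $D_4$ with simple roots $\alpha_1,\alpha_2,\alpha_3,\alpha_4$ ($\alpha_3$ central node), positive roots $\Phi_+=\{\alpha_1,\dots,\alpha_{12}\}$ with $\alpha_5=\alpha_1+\alpha_3$, $\alpha_6=\alpha_2+\alpha_3$, $\alpha_7=\alpha_3+\alpha_4$, $\alpha_8=\alpha_1+\alpha_2+\alpha_3$, $\alpha_9=\alpha_1+\alpha_3+\alpha_4$, $\alpha_{10}=\alpha_2+\alpha_3+\alpha_4$, $\alpha_{11}=\alpha_1+\alpha_2+\alpha_3+\alpha_4$, $\alpha_{12}=\alpha_1+\alpha_2+2\alpha_3+\alpha_4$; $\operatorname{ht}$ is the height. $U=U(q)$ is the Sylow $p$-subgroup of the Chevalley group $D_4(q)$ generated by $x_i(t)$ ($i=1,\dots,12$, $t\in\mathbb{F}_q$),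 with $x_i(t)x_i(u)=x_i(t+u)$, each element uniquely $x_1(d_1)\cdots x_{12}(d_{12})$, and commutators ($[a,b]=a^{-1}b^{-1}ab$): $[x_1(t),x_3(u)]=x_5(tu)$, $[x_1(t),x_6(u)]=x_8(-tu)$, $[x_1(t),x_7(u)]=x_9(tu)$, $[x_1(t),x_{10}(u)]=x_{11}(-tu)$, $[x_2(t),x_3(u)]=x_6(tu)$, $[x_2(t),x_5(u)]=x_8(-tu)$, $[x_2(t),x_7(u)]=x_{10}(tu)$, $[x_2(t),x_9(u)]=x_{11}(-tu)$, $[x_3(t),x_4(u)]=x_7(tu)$, $[x_3(t),x_{11}(u)]=x_{12}(-tu)$, $[x_4(t),x_5(u)]=x_9(-tu)$, $[x_4(t),x_6(u)]=x_{10}(-tu)$, $[x_4(t),x_8(u)]=x_{11}(-tu)$, $[x_5(t),x_{10}(u)]=x_{12}(-tu)$, $[x_6(t),x_9(u)]=x_{12}(-tu)$, $[x_7(t),x_8(u)]=x_{12}(tu)$, others trivial. $X_{\alpha_i}=\{x_i(t)\}$. Fix a nontrivial linear character $\phi$ of $(\mathbb{F}_q,+)$; $\varphi_{\alpha_i,s}(x_i(d))=\phi(sd)$. Hooks: $h_\alpha=\{\gamma\in\Phi_+:\exists\gamma'\in\Phi_+\cup\{0\},\ \gamma+\gamma'=\alpha\}$; $\operatorname{arm}(h_\alpha)=(h_\alpha\cap h_{\alpha_{12}})\setminus\{\alpha\}$ if $\alpha\neq\alpha_{12}$, $\operatorname{arm}(h_{\alpha_{12}})=\{\alpha_8,\alpha_9,\alpha_{10},\alpha_{11}\}$;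 $\operatorname{leg}(h_\alpha)=h_\alpha\setminus(\operatorname{arm}(h_\alpha)\cup\{\alpha\})$. $V_\alpha=\prod_{\gamma\in\Phi_+\setminus\operatorname{leg}(h_\alpha)}X_\gamma$, a subgroup of $U$. $\chi^U$ denotes induction to $U$. *)

theory Defs
  imports "HOL-Algebra.Group" "Jordan_Normal_Form.Matrix"
begin

definition rc :: "nat \<Rightarrow> int list" where
  "rc i = (if i = 1 then [1,0,0,0] else if i = 2 then [0,1,0,0]
      else if i = 3 then [0,0,1,0] else if i = 4 then [0,0,0,1]
      else if i = 5 then [1,0,1,0] else if i = 6 then [0,1,1,0]
      else if i = 7 then [0,0,1,1] else if i = 8 then [1,1,1,0]
      else if i = 9 then [1,0,1,1] else if i = 10 then [0,1,1,1]
      else if i = 11 then [1,1,1,1] else if i = 12 then [1,1,2,1] else [0,0,0,0])"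

definition posroots :: "nat set" where "posroots = {1..12}"

definition ht :: "nat \<Rightarrow> int" where "ht i = sum_list (rc i)"

text \<open>hook h_a: gamma positive with a = gamma + gamma', gamma' positive root or 0\<close>
definition hook :: "nat \<Rightarrow> nat set" where
  "hook a = {g \<in> posroots. rc g = rc a \<or> (\<exists>g' \<in> posroots. map2 (+) (rc g) (rc g') = rc a)}"

definition arm :: "nat \<Rightarrow> nat set" where
  "arm a = (if a = 12 then {8,9,10,11} else (hook a \<inter> hook 12) - {a})"

definition leg :: "nat \<Rightarrow> nat set" where
  "leg a = hook a - (arm a \<union> {a})"

definition comm :: "('g, 'b) monoid_scheme \<Rightarrow> 'g \<Rightarrow> 'g \<Rightarrow> 'g" where
  "comm G a b = inv\<^bsub>G\<^esub> a \<otimes>\<^bsub>G\<^esub> inv\<^bsub>G\<^esub> b \<otimes>\<^bsub>G\<^esub> a \<otimes>\<^bsub>G\<^esub> b"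

text \<open>Commutator table: cr i j = Some (k, c) means [x_i(t), x_j(u)] = x_k(c t u); None means trivial.\<close>
definition cr :: "nat \<Rightarrow> nat \<Rightarrow> (nat \<times> int) option" where
  "cr i j = (if (i,j) = (1,3) then Some (5,1) else if (i,j) = (1,6) then Some (8,-1)
     else if (i,j) = (1,7) then Some (9,1) else if (i,j) = (1,10) then Some (11,-1)
     else if (i,j) = (2,3) then Some (6,1) else if (i,j) = (2,5) then Some (8,-1)
     else if (i,j) = (2,7) then Some (10,1) else if (i,j) = (2,9) then Some (11,-1)
     else if (i,j) = (3,4) then Some (7,1) else if (i,j) = (3,11) then Some (12,-1)
     else if (i,j) = (4,5) then Some (9,-1) else if (i,j) = (4,6) then Some (10,-1)
     else if (i,j) = (4,8) then Some (11,-1) else if (i,j) = (5,10) then Some (12,-1)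
     else if (i,j) = (6,9) then Some (12,-1) else if (i,j) = (7,8) then Some (12,1)
     else None)"

definition nf :: "('g, 'b) monoid_scheme \<Rightarrow> (nat \<Rightarrow> 'a \<Rightarrow> 'g) \<Rightarrow> (nat \<Rightarrow> 'a) \<Rightarrow> 'g" where
  "nf G x d = foldr (\<lambda>i r. x i (d i) \<otimes>\<^bsub>G\<^esub> r) [1..<13] \<one>\<^bsub>G\<^esub>"

definition coords :: "(nat \<Rightarrow> 'a::zero) set" where
  "coords = {d. \<forall>i. i \<notin> {1..12} \<longrightarrow> d i = 0}"

text \<open>G (with root elements x) is the Sylow p-subgroup U(q) of D4(q) in Chevalley presentation.\<close>
definition is_U_D4 :: "('g, 'b) monoid_scheme \<Rightarrow> (nat \<Rightarrow> 'a::{field,finite} \<Rightarrow> 'g) \<Rightarrow> bool" where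
  "is_U_D4 G x \<longleftrightarrow> group G
     \<and> (\<forall>i \<in> {1..12}. \<forall>t. x i t \<in> carrier G)
     \<and> (\<forall>i \<in> {1..12}. \<forall>t u. x i t \<otimes>\<^bsub>G\<^esub> x i u = x i (t + u))
     \<and> bij_betw (nf G x) coords (carrier G)
     \<and> (\<forall>i \<in> {1..12}. \<forall>j \<in> {1..12}. i < j \<longrightarrow> (\<forall>t u.
          comm G (x i t) (x j u) =
            (case cr i j of Some (k, c) \<Rightarrow> x k (of_int c * t * u) | None \<Rightarrow> \<one>\<^bsub>G\<^esub>)))"

text \<open>V_alpha = product of X_gamma over gamma not in leg(h_alpha)\<close>
definition Vsub :: "('g, 'b) monoid_scheme \<Rightarrow> (nat \<Rightarrow> 'a::zero \<Rightarrow> 'g) \<Rightarrow> nat \<Rightarrow> 'g set" where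
  "Vsub G x a = nf G x ` {d \<in> coords. \<forall>g \<in> leg a. d g = 0}"

definition nontriv_add_char :: "('a::field \<Rightarrow> complex) \<Rightarrow> bool" where
  "nontriv_add_char \<phi> \<longleftrightarrow> (\<forall>a b. \<phi> (a + b) = \<phi> a * \<phi> b) \<and> (\<forall>a. \<phi> a \<noteq> 0) \<and> (\<exists>a. \<phi> a \<noteq> 1)"

definition linear_char :: "('g, 'b) monoid_scheme \<Rightarrow> 'g set \<Rightarrow> ('g \<Rightarrow> complex) \<Rightarrow> bool" where
  "linear_char G H l \<longleftrightarrow> (\<forall>g \<in> H. \<forall>h \<in> H. l (g \<otimes>\<^bsub>G\<^esub> h) = l g * l h) \<and> (\<forall>g \<in> H. l g \<noteq> 0)"

definition induce :: "('g, 'b) monoid_scheme \<Rightarrow> 'g set \<Rightarrow> ('g \<Rightarrow> complex) \<Rightarrow> 'g \<Rightarrow> complex" where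
  "induce G H f g = (if g \<in> carrier G then
      (1 / of_nat (card H)) * (\<Sum>y \<in> carrier G.
         (if inv\<^bsub>G\<^esub> y \<otimes>\<^bsub>G\<^esub> g \<otimes>\<^bsub>G\<^esub> y \<in> H then f (inv\<^bsub>G\<^esub> y \<otimes>\<^bsub>G\<^esub> g \<otimes>\<^bsub>G\<^esub> y) else 0))
    else 0)"

definition is_rep :: "('g, 'b) monoid_scheme \<Rightarrow> nat \<Rightarrow> ('g \<Rightarrow> complex mat) \<Rightarrow> bool" where
  "is_rep G n \<rho> \<longleftrightarrow> (\<forall>g \<in> carrier G. \<rho> g \<in> carrier_mat n n)
     \<and> (\<forall>g \<in> carrier G. \<forall>h \<in> carrier G. \<rho> (g \<otimes>\<^bsub>G\<^esub> h) = \<rho> g * \<rho> h)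
     \<and> \<rho> \<one>\<^bsub>G\<^esub> = 1\<^sub>m n"

definition is_subspace :: "nat \<Rightarrow> complex vec set \<Rightarrow> bool" where
  "is_subspace n W \<longleftrightarrow> W \<subseteq> carrier_vec n \<and> 0\<^sub>v n \<in> W
     \<and> (\<forall>v \<in> W. \<forall>w \<in> W. v + w \<in> W) \<and> (\<forall>c. \<forall>v \<in> W. c \<cdot>\<^sub>v v \<in> W)"

definition irreducible_rep :: "('g, 'b) monoid_scheme \<Rightarrow> nat \<Rightarrow> ('g \<Rightarrow> complex mat) \<Rightarrow> bool" where
  "irreducible_rep G n \<rho> \<longleftrightarrow> is_rep G n \<rho> \<and> n > 0
     \<and> (\<forall>W. is_subspace n W \<and> (\<forall>g \<in> carrier G. \<forall>w \<in> W. \<rho> g *\<^sub>v w \<in> W)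
            \<longrightarrow> W = {0\<^sub>v n} \<or> W = carrier_vec n)"

definition mat_trace :: "complex mat \<Rightarrow> complex" where
  "mat_trace A = (\<Sum>i < dim_row A. A $$ (i, i))"

definition irreducible_char :: "('g, 'b) monoid_scheme \<Rightarrow> ('g \<Rightarrow> complex) \<Rightarrow> bool" where
  "irreducible_char G \<chi> \<longleftrightarrow> (\<exists>n \<rho>. irreducible_rep G n \<rho> \<and> (\<forall>g \<in> carrier G. \<chi> g = mat_trace (\<rho> g)))"

end

theory Submission
  imports Defs
begin

locale d4 =
  fixes G :: "('g, 'b) monoid_scheme" (structure) and x :: "nat \<Rightarrow> 'a::{field,finite} \<Rightarrow> 'g"
  assumes U: "is_U_D4 G x"
begin

lemma grp: "group G" using U unfolding is_U_D4_def by blast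

sublocale group G by (rule grp)

lemma xc[simp]: "1 \<le> i \<Longrightarrow> i \<le> 12 \<Longrightarrow> x i t \<in> carrier G"
  using U unfolding is_U_D4_def by auto

lemma xadd: "1 \<le> i \<Longrightarrow> i \<le> 12 \<Longrightarrow> x i t \<otimes> x i u = x i (t + u)"
  using U unfolding is_U_D4_def by auto

lemma x0[simp]: "1 \<le> i \<Longrightarrow> i \<le> 12 \<Longrightarrow> x i 0 = \<one>"
proof -
  assume h: "1 \<le> i" "i \<le> 12"
  have "x i 0 \<otimes> x i 0 = x i 0" using xadd[OF h, of 0 0] h by simp
  then show ?thesis using h by simp
qed

lemma cancel1[simp]: "b \<in> carrier G \<Longrightarrow> c \<in> carrier G \<Longrightarrow> b \<otimes> (inv b \<otimes> c) = c"
  by (simp add: m_assoc[symmetric])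
lemma cancel2[simp]: "b \<in> carrier G \<Longrightarrow> c \<in> carrier G \<Longrightarrow> inv b \<otimes> (b \<otimes> c) = c"
  by (simp add: m_assoc[symmetric])

lemma xinv: "1 \<le> i \<Longrightarrow> i \<le> 12 \<Longrightarrow> inv (x i t) = x i (- t)"
  by (metis inv_equality xadd add.right_inverse x0 xc add.left_inverse)

lemma commv: "1 \<le> i \<Longrightarrow> i < j \<Longrightarrow> j \<le> 12 \<Longrightarrow> comm G (x i t) (x j u) =
            (case cr i j of Some (k, c) \<Rightarrow> x k (of_int c * t * u) | None \<Rightarrow> \<one>)"
  using U unfolding is_U_D4_def by auto

lemma swap_gen: "a \<in> carrier G \<Longrightarrow> b \<in> carrier G \<Longrightarrow> b \<otimes> a = a \<otimes> (b \<otimes> inv (comm G a b))"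
  unfolding comm_def by (simp add: inv_mult_group m_assoc)

lemma swap: "1 \<le> i \<Longrightarrow> i < j \<Longrightarrow> j \<le> 12 \<Longrightarrow> x j u \<otimes> x i t = x i t \<otimes> (x j u \<otimes> inv (comm G (x i t) (x j u)))"
  by (rule swap_gen) auto

lemma swapr: "1 \<le> i \<Longrightarrow> i < j \<Longrightarrow> j \<le> 12 \<Longrightarrow> r \<in> carrier G \<Longrightarrow>
   x j u \<otimes> (x i t \<otimes> r) = x i t \<otimes> (x j u \<otimes> (inv (comm G (x i t) (x j u)) \<otimes> r))"
proof -
  assume h: "1 \<le> i" "i < j" "j \<le> 12" "r \<in> carrier G"
  have c: "comm G (x i t) (x j u) \<in> carrier G" unfolding comm_def using h by auto
  have "x j u \<otimes> (x i t \<otimes> r) = (x j u \<otimes> x i t) \<otimes> r" using h by (simp add: m_assoc)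
  also have "\<dots> = x i t \<otimes> (x j u \<otimes> (inv (comm G (x i t) (x j u)) \<otimes> r))"
    using h c by (simp add: swap m_assoc)
  finally show ?thesis .
qed

lemma merge: "1 \<le> i \<Longrightarrow> i \<le> 12 \<Longrightarrow> r \<in> carrier G \<Longrightarrow> x i t \<otimes> (x i u \<otimes> r) = x i (t + u) \<otimes> r"
  by (simp add: m_assoc[symmetric] xadd)

lemma cl_1_2: "r \<in> carrier G \<Longrightarrow> x 2 u \<otimes> (x 1 t \<otimes> r) = x 1 t \<otimes> (x 2 u \<otimes> r)"
  using swapr[of 1 2 r u t] by (simp add: commv cr_def xinv)
lemma cl0_1_2: "x 2 u \<otimes> x 1 t = x 1 t \<otimes> x 2 u"
  using swap[of 1 2 u t] by (simp add: commv cr_def xinv)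
lemma cl_1_3: "r \<in> carrier G \<Longrightarrow> x 3 u \<otimes> (x 1 t \<otimes> r) = x 1 t \<otimes> (x 3 u \<otimes> (x 5 (- (t * u)) \<otimes> r))"
  using swapr[of 1 3 r u t] by (simp add: commv cr_def xinv)
lemma cl0_1_3: "x 3 u \<otimes> x 1 t = x 1 t \<otimes> (x 3 u \<otimes> x 5 (- (t * u)))"
  using swap[of 1 3 u t] by (simp add: commv cr_def xinv)
lemma cl_1_4: "r \<in> carrier G \<Longrightarrow> x 4 u \<otimes> (x 1 t \<otimes> r) = x 1 t \<otimes> (x 4 u \<otimes> r)"
  using swapr[of 1 4 r u t] by (simp add: commv cr_def xinv)
lemma cl0_1_4: "x 4 u \<otimes> x 1 t = x 1 t \<otimes> x 4 u"
  using swap[of 1 4 u t] by (simp add: commv cr_def xinv)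
lemma cl_1_5: "r \<in> carrier G \<Longrightarrow> x 5 u \<otimes> (x 1 t \<otimes> r) = x 1 t \<otimes> (x 5 u \<otimes> r)"
  using swapr[of 1 5 r u t] by (simp add: commv cr_def xinv)
lemma cl0_1_5: "x 5 u \<otimes> x 1 t = x 1 t \<otimes> x 5 u"
  using swap[of 1 5 u t] by (simp add: commv cr_def xinv)
lemma cl_1_6: "r \<in> carrier G \<Longrightarrow> x 6 u \<otimes> (x 1 t \<otimes> r) = x 1 t \<otimes> (x 6 u \<otimes> (x 8 (t * u) \<otimes> r))"
  using swapr[of 1 6 r u t] by (simp add: commv cr_def xinv)
lemma cl0_1_6: "x 6 u \<otimes> x 1 t = x 1 t \<otimes> (x 6 u \<otimes> x 8 (t * u))"
  using swap[of 1 6 u t] by (simp add: commv cr_def xinv)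
lemma cl_1_7: "r \<in> carrier G \<Longrightarrow> x 7 u \<otimes> (x 1 t \<otimes> r) = x 1 t \<otimes> (x 7 u \<otimes> (x 9 (- (t * u)) \<otimes> r))"
  using swapr[of 1 7 r u t] by (simp add: commv cr_def xinv)
lemma cl0_1_7: "x 7 u \<otimes> x 1 t = x 1 t \<otimes> (x 7 u \<otimes> x 9 (- (t * u)))"
  using swap[of 1 7 u t] by (simp add: commv cr_def xinv)
lemma cl_1_8: "r \<in> carrier G \<Longrightarrow> x 8 u \<otimes> (x 1 t \<otimes> r) = x 1 t \<otimes> (x 8 u \<otimes> r)"
  using swapr[of 1 8 r u t] by (simp add: commv cr_def xinv)
lemma cl0_1_8: "x 8 u \<otimes> x 1 t = x 1 t \<otimes> x 8 u"
  using swap[of 1 8 u t] by (simp add: commv cr_def xinv)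
lemma cl_1_9: "r \<in> carrier G \<Longrightarrow> x 9 u \<otimes> (x 1 t \<otimes> r) = x 1 t \<otimes> (x 9 u \<otimes> r)"
  using swapr[of 1 9 r u t] by (simp add: commv cr_def xinv)
lemma cl0_1_9: "x 9 u \<otimes> x 1 t = x 1 t \<otimes> x 9 u"
  using swap[of 1 9 u t] by (simp add: commv cr_def xinv)
lemma cl_1_10: "r \<in> carrier G \<Longrightarrow> x 10 u \<otimes> (x 1 t \<otimes> r) = x 1 t \<otimes> (x 10 u \<otimes> (x 11 (t * u) \<otimes> r))"
  using swapr[of 1 10 r u t] by (simp add: commv cr_def xinv)
lemma cl0_1_10: "x 10 u \<otimes> x 1 t = x 1 t \<otimes> (x 10 u \<otimes> x 11 (t * u))"
  using swap[of 1 10 u t] by (simp add: commv cr_def xinv)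
lemma cl_1_11: "r \<in> carrier G \<Longrightarrow> x 11 u \<otimes> (x 1 t \<otimes> r) = x 1 t \<otimes> (x 11 u \<otimes> r)"
  using swapr[of 1 11 r u t] by (simp add: commv cr_def xinv)
lemma cl0_1_11: "x 11 u \<otimes> x 1 t = x 1 t \<otimes> x 11 u"
  using swap[of 1 11 u t] by (simp add: commv cr_def xinv)
lemma cl_1_12: "r \<in> carrier G \<Longrightarrow> x 12 u \<otimes> (x 1 t \<otimes> r) = x 1 t \<otimes> (x 12 u \<otimes> r)"
  using swapr[of 1 12 r u t] by (simp add: commv cr_def xinv)
lemma cl0_1_12: "x 12 u \<otimes> x 1 t = x 1 t \<otimes> x 12 u"
  using swap[of 1 12 u t] by (simp add: commv cr_def xinv)
lemma cl_2_3: "r \<in> carrier G \<Longrightarrow> x 3 u \<otimes> (x 2 t \<otimes> r) = x 2 t \<otimes> (x 3 u \<otimes> (x 6 (- (t * u)) \<otimes> r))"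
  using swapr[of 2 3 r u t] by (simp add: commv cr_def xinv)
lemma cl0_2_3: "x 3 u \<otimes> x 2 t = x 2 t \<otimes> (x 3 u \<otimes> x 6 (- (t * u)))"
  using swap[of 2 3 u t] by (simp add: commv cr_def xinv)
lemma cl_2_4: "r \<in> carrier G \<Longrightarrow> x 4 u \<otimes> (x 2 t \<otimes> r) = x 2 t \<otimes> (x 4 u \<otimes> r)"
  using swapr[of 2 4 r u t] by (simp add: commv cr_def xinv)
lemma cl0_2_4: "x 4 u \<otimes> x 2 t = x 2 t \<otimes> x 4 u"
  using swap[of 2 4 u t] by (simp add: commv cr_def xinv)
lemma cl_2_5: "r \<in> carrier G \<Longrightarrow> x 5 u \<otimes> (x 2 t \<otimes> r) = x 2 t \<otimes> (x 5 u \<otimes> (x 8 (t * u) \<otimes> r))"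
  using swapr[of 2 5 r u t] by (simp add: commv cr_def xinv)
lemma cl0_2_5: "x 5 u \<otimes> x 2 t = x 2 t \<otimes> (x 5 u \<otimes> x 8 (t * u))"
  using swap[of 2 5 u t] by (simp add: commv cr_def xinv)
lemma cl_2_6: "r \<in> carrier G \<Longrightarrow> x 6 u \<otimes> (x 2 t \<otimes> r) = x 2 t \<otimes> (x 6 u \<otimes> r)"
  using swapr[of 2 6 r u t] by (simp add: commv cr_def xinv)
lemma cl0_2_6: "x 6 u \<otimes> x 2 t = x 2 t \<otimes> x 6 u"
  using swap[of 2 6 u t] by (simp add: commv cr_def xinv)
lemma cl_2_7: "r \<in> carrier G \<Longrightarrow> x 7 u \<otimes> (x 2 t \<otimes> r) = x 2 t \<otimes> (x 7 u \<otimes> (x 10 (- (t * u)) \<otimes> r))"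
  using swapr[of 2 7 r u t] by (simp add: commv cr_def xinv)
lemma cl0_2_7: "x 7 u \<otimes> x 2 t = x 2 t \<otimes> (x 7 u \<otimes> x 10 (- (t * u)))"
  using swap[of 2 7 u t] by (simp add: commv cr_def xinv)
lemma cl_2_8: "r \<in> carrier G \<Longrightarrow> x 8 u \<otimes> (x 2 t \<otimes> r) = x 2 t \<otimes> (x 8 u \<otimes> r)"
  using swapr[of 2 8 r u t] by (simp add: commv cr_def xinv)
lemma cl0_2_8: "x 8 u \<otimes> x 2 t = x 2 t \<otimes> x 8 u"
  using swap[of 2 8 u t] by (simp add: commv cr_def xinv)
lemma cl_2_9: "r \<in> carrier G \<Longrightarrow> x 9 u \<otimes> (x 2 t \<otimes> r) = x 2 t \<otimes> (x 9 u \<otimes> (x 11 (t * u) \<otimes> r))"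
  using swapr[of 2 9 r u t] by (simp add: commv cr_def xinv)
lemma cl0_2_9: "x 9 u \<otimes> x 2 t = x 2 t \<otimes> (x 9 u \<otimes> x 11 (t * u))"
  using swap[of 2 9 u t] by (simp add: commv cr_def xinv)
lemma cl_2_10: "r \<in> carrier G \<Longrightarrow> x 10 u \<otimes> (x 2 t \<otimes> r) = x 2 t \<otimes> (x 10 u \<otimes> r)"
  using swapr[of 2 10 r u t] by (simp add: commv cr_def xinv)
lemma cl0_2_10: "x 10 u \<otimes> x 2 t = x 2 t \<otimes> x 10 u"
  using swap[of 2 10 u t] by (simp add: commv cr_def xinv)
lemma cl_2_11: "r \<in> carrier G \<Longrightarrow> x 11 u \<otimes> (x 2 t \<otimes> r) = x 2 t \<otimes> (x 11 u \<otimes> r)"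
  using swapr[of 2 11 r u t] by (simp add: commv cr_def xinv)
lemma cl0_2_11: "x 11 u \<otimes> x 2 t = x 2 t \<otimes> x 11 u"
  using swap[of 2 11 u t] by (simp add: commv cr_def xinv)
lemma cl_2_12: "r \<in> carrier G \<Longrightarrow> x 12 u \<otimes> (x 2 t \<otimes> r) = x 2 t \<otimes> (x 12 u \<otimes> r)"
  using swapr[of 2 12 r u t] by (simp add: commv cr_def xinv)
lemma cl0_2_12: "x 12 u \<otimes> x 2 t = x 2 t \<otimes> x 12 u"
  using swap[of 2 12 u t] by (simp add: commv cr_def xinv)
lemma cl_3_4: "r \<in> carrier G \<Longrightarrow> x 4 u \<otimes> (x 3 t \<otimes> r) = x 3 t \<otimes> (x 4 u \<otimes> (x 7 (- (t * u)) \<otimes> r))"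
  using swapr[of 3 4 r u t] by (simp add: commv cr_def xinv)
lemma cl0_3_4: "x 4 u \<otimes> x 3 t = x 3 t \<otimes> (x 4 u \<otimes> x 7 (- (t * u)))"
  using swap[of 3 4 u t] by (simp add: commv cr_def xinv)
lemma cl_3_5: "r \<in> carrier G \<Longrightarrow> x 5 u \<otimes> (x 3 t \<otimes> r) = x 3 t \<otimes> (x 5 u \<otimes> r)"
  using swapr[of 3 5 r u t] by (simp add: commv cr_def xinv)
lemma cl0_3_5: "x 5 u \<otimes> x 3 t = x 3 t \<otimes> x 5 u"
  using swap[of 3 5 u t] by (simp add: commv cr_def xinv)
lemma cl_3_6: "r \<in> carrier G \<Longrightarrow> x 6 u \<otimes> (x 3 t \<otimes> r) = x 3 t \<otimes> (x 6 u \<otimes> r)"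
  using swapr[of 3 6 r u t] by (simp add: commv cr_def xinv)
lemma cl0_3_6: "x 6 u \<otimes> x 3 t = x 3 t \<otimes> x 6 u"
  using swap[of 3 6 u t] by (simp add: commv cr_def xinv)
lemma cl_3_7: "r \<in> carrier G \<Longrightarrow> x 7 u \<otimes> (x 3 t \<otimes> r) = x 3 t \<otimes> (x 7 u \<otimes> r)"
  using swapr[of 3 7 r u t] by (simp add: commv cr_def xinv)
lemma cl0_3_7: "x 7 u \<otimes> x 3 t = x 3 t \<otimes> x 7 u"
  using swap[of 3 7 u t] by (simp add: commv cr_def xinv)
lemma cl_3_8: "r \<in> carrier G \<Longrightarrow> x 8 u \<otimes> (x 3 t \<otimes> r) = x 3 t \<otimes> (x 8 u \<otimes> r)"
  using swapr[of 3 8 r u t] by (simp add: commv cr_def xinv)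
lemma cl0_3_8: "x 8 u \<otimes> x 3 t = x 3 t \<otimes> x 8 u"
  using swap[of 3 8 u t] by (simp add: commv cr_def xinv)
lemma cl_3_9: "r \<in> carrier G \<Longrightarrow> x 9 u \<otimes> (x 3 t \<otimes> r) = x 3 t \<otimes> (x 9 u \<otimes> r)"
  using swapr[of 3 9 r u t] by (simp add: commv cr_def xinv)
lemma cl0_3_9: "x 9 u \<otimes> x 3 t = x 3 t \<otimes> x 9 u"
  using swap[of 3 9 u t] by (simp add: commv cr_def xinv)
lemma cl_3_10: "r \<in> carrier G \<Longrightarrow> x 10 u \<otimes> (x 3 t \<otimes> r) = x 3 t \<otimes> (x 10 u \<otimes> r)"
  using swapr[of 3 10 r u t] by (simp add: commv cr_def xinv)
lemma cl0_3_10: "x 10 u \<otimes> x 3 t = x 3 t \<otimes> x 10 u"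
  using swap[of 3 10 u t] by (simp add: commv cr_def xinv)
lemma cl_3_11: "r \<in> carrier G \<Longrightarrow> x 11 u \<otimes> (x 3 t \<otimes> r) = x 3 t \<otimes> (x 11 u \<otimes> (x 12 (t * u) \<otimes> r))"
  using swapr[of 3 11 r u t] by (simp add: commv cr_def xinv)
lemma cl0_3_11: "x 11 u \<otimes> x 3 t = x 3 t \<otimes> (x 11 u \<otimes> x 12 (t * u))"
  using swap[of 3 11 u t] by (simp add: commv cr_def xinv)
lemma cl_3_12: "r \<in> carrier G \<Longrightarrow> x 12 u \<otimes> (x 3 t \<otimes> r) = x 3 t \<otimes> (x 12 u \<otimes> r)"
  using swapr[of 3 12 r u t] by (simp add: commv cr_def xinv)
lemma cl0_3_12: "x 12 u \<otimes> x 3 t = x 3 t \<otimes> x 12 u"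
  using swap[of 3 12 u t] by (simp add: commv cr_def xinv)
lemma cl_4_5: "r \<in> carrier G \<Longrightarrow> x 5 u \<otimes> (x 4 t \<otimes> r) = x 4 t \<otimes> (x 5 u \<otimes> (x 9 (t * u) \<otimes> r))"
  using swapr[of 4 5 r u t] by (simp add: commv cr_def xinv)
lemma cl0_4_5: "x 5 u \<otimes> x 4 t = x 4 t \<otimes> (x 5 u \<otimes> x 9 (t * u))"
  using swap[of 4 5 u t] by (simp add: commv cr_def xinv)
lemma cl_4_6: "r \<in> carrier G \<Longrightarrow> x 6 u \<otimes> (x 4 t \<otimes> r) = x 4 t \<otimes> (x 6 u \<otimes> (x 10 (t * u) \<otimes> r))"
  using swapr[of 4 6 r u t] by (simp add: commv cr_def xinv)
lemma cl0_4_6: "x 6 u \<otimes> x 4 t = x 4 t \<otimes> (x 6 u \<otimes> x 10 (t * u))"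
  using swap[of 4 6 u t] by (simp add: commv cr_def xinv)
lemma cl_4_7: "r \<in> carrier G \<Longrightarrow> x 7 u \<otimes> (x 4 t \<otimes> r) = x 4 t \<otimes> (x 7 u \<otimes> r)"
  using swapr[of 4 7 r u t] by (simp add: commv cr_def xinv)
lemma cl0_4_7: "x 7 u \<otimes> x 4 t = x 4 t \<otimes> x 7 u"
  using swap[of 4 7 u t] by (simp add: commv cr_def xinv)
lemma cl_4_8: "r \<in> carrier G \<Longrightarrow> x 8 u \<otimes> (x 4 t \<otimes> r) = x 4 t \<otimes> (x 8 u \<otimes> (x 11 (t * u) \<otimes> r))"
  using swapr[of 4 8 r u t] by (simp add: commv cr_def xinv)
lemma cl0_4_8: "x 8 u \<otimes> x 4 t = x 4 t \<otimes> (x 8 u \<otimes> x 11 (t * u))"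
  using swap[of 4 8 u t] by (simp add: commv cr_def xinv)
lemma cl_4_9: "r \<in> carrier G \<Longrightarrow> x 9 u \<otimes> (x 4 t \<otimes> r) = x 4 t \<otimes> (x 9 u \<otimes> r)"
  using swapr[of 4 9 r u t] by (simp add: commv cr_def xinv)
lemma cl0_4_9: "x 9 u \<otimes> x 4 t = x 4 t \<otimes> x 9 u"
  using swap[of 4 9 u t] by (simp add: commv cr_def xinv)
lemma cl_4_10: "r \<in> carrier G \<Longrightarrow> x 10 u \<otimes> (x 4 t \<otimes> r) = x 4 t \<otimes> (x 10 u \<otimes> r)"
  using swapr[of 4 10 r u t] by (simp add: commv cr_def xinv)
lemma cl0_4_10: "x 10 u \<otimes> x 4 t = x 4 t \<otimes> x 10 u"
  using swap[of 4 10 u t] by (simp add: commv cr_def xinv)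
lemma cl_4_11: "r \<in> carrier G \<Longrightarrow> x 11 u \<otimes> (x 4 t \<otimes> r) = x 4 t \<otimes> (x 11 u \<otimes> r)"
  using swapr[of 4 11 r u t] by (simp add: commv cr_def xinv)
lemma cl0_4_11: "x 11 u \<otimes> x 4 t = x 4 t \<otimes> x 11 u"
  using swap[of 4 11 u t] by (simp add: commv cr_def xinv)
lemma cl_4_12: "r \<in> carrier G \<Longrightarrow> x 12 u \<otimes> (x 4 t \<otimes> r) = x 4 t \<otimes> (x 12 u \<otimes> r)"
  using swapr[of 4 12 r u t] by (simp add: commv cr_def xinv)
lemma cl0_4_12: "x 12 u \<otimes> x 4 t = x 4 t \<otimes> x 12 u"
  using swap[of 4 12 u t] by (simp add: commv cr_def xinv)
lemma cl_5_6: "r \<in> carrier G \<Longrightarrow> x 6 u \<otimes> (x 5 t \<otimes> r) = x 5 t \<otimes> (x 6 u \<otimes> r)"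
  using swapr[of 5 6 r u t] by (simp add: commv cr_def xinv)
lemma cl0_5_6: "x 6 u \<otimes> x 5 t = x 5 t \<otimes> x 6 u"
  using swap[of 5 6 u t] by (simp add: commv cr_def xinv)
lemma cl_5_7: "r \<in> carrier G \<Longrightarrow> x 7 u \<otimes> (x 5 t \<otimes> r) = x 5 t \<otimes> (x 7 u \<otimes> r)"
  using swapr[of 5 7 r u t] by (simp add: commv cr_def xinv)
lemma cl0_5_7: "x 7 u \<otimes> x 5 t = x 5 t \<otimes> x 7 u"
  using swap[of 5 7 u t] by (simp add: commv cr_def xinv)
lemma cl_5_8: "r \<in> carrier G \<Longrightarrow> x 8 u \<otimes> (x 5 t \<otimes> r) = x 5 t \<otimes> (x 8 u \<otimes> r)"
  using swapr[of 5 8 r u t] by (simp add: commv cr_def xinv)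
lemma cl0_5_8: "x 8 u \<otimes> x 5 t = x 5 t \<otimes> x 8 u"
  using swap[of 5 8 u t] by (simp add: commv cr_def xinv)
lemma cl_5_9: "r \<in> carrier G \<Longrightarrow> x 9 u \<otimes> (x 5 t \<otimes> r) = x 5 t \<otimes> (x 9 u \<otimes> r)"
  using swapr[of 5 9 r u t] by (simp add: commv cr_def xinv)
lemma cl0_5_9: "x 9 u \<otimes> x 5 t = x 5 t \<otimes> x 9 u"
  using swap[of 5 9 u t] by (simp add: commv cr_def xinv)
lemma cl_5_10: "r \<in> carrier G \<Longrightarrow> x 10 u \<otimes> (x 5 t \<otimes> r) = x 5 t \<otimes> (x 10 u \<otimes> (x 12 (t * u) \<otimes> r))"
  using swapr[of 5 10 r u t] by (simp add: commv cr_def xinv)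
lemma cl0_5_10: "x 10 u \<otimes> x 5 t = x 5 t \<otimes> (x 10 u \<otimes> x 12 (t * u))"
  using swap[of 5 10 u t] by (simp add: commv cr_def xinv)
lemma cl_5_11: "r \<in> carrier G \<Longrightarrow> x 11 u \<otimes> (x 5 t \<otimes> r) = x 5 t \<otimes> (x 11 u \<otimes> r)"
  using swapr[of 5 11 r u t] by (simp add: commv cr_def xinv)
lemma cl0_5_11: "x 11 u \<otimes> x 5 t = x 5 t \<otimes> x 11 u"
  using swap[of 5 11 u t] by (simp add: commv cr_def xinv)
lemma cl_5_12: "r \<in> carrier G \<Longrightarrow> x 12 u \<otimes> (x 5 t \<otimes> r) = x 5 t \<otimes> (x 12 u \<otimes> r)"
  using swapr[of 5 12 r u t] by (simp add: commv cr_def xinv)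
lemma cl0_5_12: "x 12 u \<otimes> x 5 t = x 5 t \<otimes> x 12 u"
  using swap[of 5 12 u t] by (simp add: commv cr_def xinv)
lemma cl_6_7: "r \<in> carrier G \<Longrightarrow> x 7 u \<otimes> (x 6 t \<otimes> r) = x 6 t \<otimes> (x 7 u \<otimes> r)"
  using swapr[of 6 7 r u t] by (simp add: commv cr_def xinv)
lemma cl0_6_7: "x 7 u \<otimes> x 6 t = x 6 t \<otimes> x 7 u"
  using swap[of 6 7 u t] by (simp add: commv cr_def xinv)
lemma cl_6_8: "r \<in> carrier G \<Longrightarrow> x 8 u \<otimes> (x 6 t \<otimes> r) = x 6 t \<otimes> (x 8 u \<otimes> r)"
  using swapr[of 6 8 r u t] by (simp add: commv cr_def xinv)
lemma cl0_6_8: "x 8 u \<otimes> x 6 t = x 6 t \<otimes> x 8 u"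
  using swap[of 6 8 u t] by (simp add: commv cr_def xinv)
lemma cl_6_9: "r \<in> carrier G \<Longrightarrow> x 9 u \<otimes> (x 6 t \<otimes> r) = x 6 t \<otimes> (x 9 u \<otimes> (x 12 (t * u) \<otimes> r))"
  using swapr[of 6 9 r u t] by (simp add: commv cr_def xinv)
lemma cl0_6_9: "x 9 u \<otimes> x 6 t = x 6 t \<otimes> (x 9 u \<otimes> x 12 (t * u))"
  using swap[of 6 9 u t] by (simp add: commv cr_def xinv)
lemma cl_6_10: "r \<in> carrier G \<Longrightarrow> x 10 u \<otimes> (x 6 t \<otimes> r) = x 6 t \<otimes> (x 10 u \<otimes> r)"
  using swapr[of 6 10 r u t] by (simp add: commv cr_def xinv)
lemma cl0_6_10: "x 10 u \<otimes> x 6 t = x 6 t \<otimes> x 10 u"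
  using swap[of 6 10 u t] by (simp add: commv cr_def xinv)
lemma cl_6_11: "r \<in> carrier G \<Longrightarrow> x 11 u \<otimes> (x 6 t \<otimes> r) = x 6 t \<otimes> (x 11 u \<otimes> r)"
  using swapr[of 6 11 r u t] by (simp add: commv cr_def xinv)
lemma cl0_6_11: "x 11 u \<otimes> x 6 t = x 6 t \<otimes> x 11 u"
  using swap[of 6 11 u t] by (simp add: commv cr_def xinv)
lemma cl_6_12: "r \<in> carrier G \<Longrightarrow> x 12 u \<otimes> (x 6 t \<otimes> r) = x 6 t \<otimes> (x 12 u \<otimes> r)"
  using swapr[of 6 12 r u t] by (simp add: commv cr_def xinv)
lemma cl0_6_12: "x 12 u \<otimes> x 6 t = x 6 t \<otimes> x 12 u"
  using swap[of 6 12 u t] by (simp add: commv cr_def xinv)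
lemma cl_7_8: "r \<in> carrier G \<Longrightarrow> x 8 u \<otimes> (x 7 t \<otimes> r) = x 7 t \<otimes> (x 8 u \<otimes> (x 12 (- (t * u)) \<otimes> r))"
  using swapr[of 7 8 r u t] by (simp add: commv cr_def xinv)
lemma cl0_7_8: "x 8 u \<otimes> x 7 t = x 7 t \<otimes> (x 8 u \<otimes> x 12 (- (t * u)))"
  using swap[of 7 8 u t] by (simp add: commv cr_def xinv)
lemma cl_7_9: "r \<in> carrier G \<Longrightarrow> x 9 u \<otimes> (x 7 t \<otimes> r) = x 7 t \<otimes> (x 9 u \<otimes> r)"
  using swapr[of 7 9 r u t] by (simp add: commv cr_def xinv)
lemma cl0_7_9: "x 9 u \<otimes> x 7 t = x 7 t \<otimes> x 9 u"
  using swap[of 7 9 u t] by (simp add: commv cr_def xinv)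
lemma cl_7_10: "r \<in> carrier G \<Longrightarrow> x 10 u \<otimes> (x 7 t \<otimes> r) = x 7 t \<otimes> (x 10 u \<otimes> r)"
  using swapr[of 7 10 r u t] by (simp add: commv cr_def xinv)
lemma cl0_7_10: "x 10 u \<otimes> x 7 t = x 7 t \<otimes> x 10 u"
  using swap[of 7 10 u t] by (simp add: commv cr_def xinv)
lemma cl_7_11: "r \<in> carrier G \<Longrightarrow> x 11 u \<otimes> (x 7 t \<otimes> r) = x 7 t \<otimes> (x 11 u \<otimes> r)"
  using swapr[of 7 11 r u t] by (simp add: commv cr_def xinv)
lemma cl0_7_11: "x 11 u \<otimes> x 7 t = x 7 t \<otimes> x 11 u"
  using swap[of 7 11 u t] by (simp add: commv cr_def xinv)
lemma cl_7_12: "r \<in> carrier G \<Longrightarrow> x 12 u \<otimes> (x 7 t \<otimes> r) = x 7 t \<otimes> (x 12 u \<otimes> r)"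
  using swapr[of 7 12 r u t] by (simp add: commv cr_def xinv)
lemma cl0_7_12: "x 12 u \<otimes> x 7 t = x 7 t \<otimes> x 12 u"
  using swap[of 7 12 u t] by (simp add: commv cr_def xinv)
lemma cl_8_9: "r \<in> carrier G \<Longrightarrow> x 9 u \<otimes> (x 8 t \<otimes> r) = x 8 t \<otimes> (x 9 u \<otimes> r)"
  using swapr[of 8 9 r u t] by (simp add: commv cr_def xinv)
lemma cl0_8_9: "x 9 u \<otimes> x 8 t = x 8 t \<otimes> x 9 u"
  using swap[of 8 9 u t] by (simp add: commv cr_def xinv)
lemma cl_8_10: "r \<in> carrier G \<Longrightarrow> x 10 u \<otimes> (x 8 t \<otimes> r) = x 8 t \<otimes> (x 10 u \<otimes> r)"
  using swapr[of 8 10 r u t] by (simp add: commv cr_def xinv)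
lemma cl0_8_10: "x 10 u \<otimes> x 8 t = x 8 t \<otimes> x 10 u"
  using swap[of 8 10 u t] by (simp add: commv cr_def xinv)
lemma cl_8_11: "r \<in> carrier G \<Longrightarrow> x 11 u \<otimes> (x 8 t \<otimes> r) = x 8 t \<otimes> (x 11 u \<otimes> r)"
  using swapr[of 8 11 r u t] by (simp add: commv cr_def xinv)
lemma cl0_8_11: "x 11 u \<otimes> x 8 t = x 8 t \<otimes> x 11 u"
  using swap[of 8 11 u t] by (simp add: commv cr_def xinv)
lemma cl_8_12: "r \<in> carrier G \<Longrightarrow> x 12 u \<otimes> (x 8 t \<otimes> r) = x 8 t \<otimes> (x 12 u \<otimes> r)"
  using swapr[of 8 12 r u t] by (simp add: commv cr_def xinv)
lemma cl0_8_12: "x 12 u \<otimes> x 8 t = x 8 t \<otimes> x 12 u"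
  using swap[of 8 12 u t] by (simp add: commv cr_def xinv)
lemma cl_9_10: "r \<in> carrier G \<Longrightarrow> x 10 u \<otimes> (x 9 t \<otimes> r) = x 9 t \<otimes> (x 10 u \<otimes> r)"
  using swapr[of 9 10 r u t] by (simp add: commv cr_def xinv)
lemma cl0_9_10: "x 10 u \<otimes> x 9 t = x 9 t \<otimes> x 10 u"
  using swap[of 9 10 u t] by (simp add: commv cr_def xinv)
lemma cl_9_11: "r \<in> carrier G \<Longrightarrow> x 11 u \<otimes> (x 9 t \<otimes> r) = x 9 t \<otimes> (x 11 u \<otimes> r)"
  using swapr[of 9 11 r u t] by (simp add: commv cr_def xinv)
lemma cl0_9_11: "x 11 u \<otimes> x 9 t = x 9 t \<otimes> x 11 u"
  using swap[of 9 11 u t] by (simp add: commv cr_def xinv)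
lemma cl_9_12: "r \<in> carrier G \<Longrightarrow> x 12 u \<otimes> (x 9 t \<otimes> r) = x 9 t \<otimes> (x 12 u \<otimes> r)"
  using swapr[of 9 12 r u t] by (simp add: commv cr_def xinv)
lemma cl0_9_12: "x 12 u \<otimes> x 9 t = x 9 t \<otimes> x 12 u"
  using swap[of 9 12 u t] by (simp add: commv cr_def xinv)
lemma cl_10_11: "r \<in> carrier G \<Longrightarrow> x 11 u \<otimes> (x 10 t \<otimes> r) = x 10 t \<otimes> (x 11 u \<otimes> r)"
  using swapr[of 10 11 r u t] by (simp add: commv cr_def xinv)
lemma cl0_10_11: "x 11 u \<otimes> x 10 t = x 10 t \<otimes> x 11 u"
  using swap[of 10 11 u t] by (simp add: commv cr_def xinv)
lemma cl_10_12: "r \<in> carrier G \<Longrightarrow> x 12 u \<otimes> (x 10 t \<otimes> r) = x 10 t \<otimes> (x 12 u \<otimes> r)"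
  using swapr[of 10 12 r u t] by (simp add: commv cr_def xinv)
lemma cl0_10_12: "x 12 u \<otimes> x 10 t = x 10 t \<otimes> x 12 u"
  using swap[of 10 12 u t] by (simp add: commv cr_def xinv)
lemma cl_11_12: "r \<in> carrier G \<Longrightarrow> x 12 u \<otimes> (x 11 t \<otimes> r) = x 11 t \<otimes> (x 12 u \<otimes> r)"
  using swapr[of 11 12 r u t] by (simp add: commv cr_def xinv)
lemma cl0_11_12: "x 12 u \<otimes> x 11 t = x 11 t \<otimes> x 12 u"
  using swap[of 11 12 u t] by (simp add: commv cr_def xinv)
lemmas coll = cl_1_2 cl0_1_2 cl_1_3 cl0_1_3 cl_1_4 cl0_1_4 cl_1_5 cl0_1_5 cl_1_6 cl0_1_6 cl_1_7 cl0_1_7 cl_1_8 cl0_1_8 cl_1_9 cl0_1_9 cl_1_10 cl0_1_10 cl_1_11 cl0_1_11 cl_1_12 cl0_1_12 cl_2_3 cl0_2_3 cl_2_4 cl0_2_4 cl_2_5 cl0_2_5 cl_2_6 cl0_2_6 cl_2_7 cl0_2_7 cl_2_8 cl0_2_8 cl_2_9 cl0_2_9 cl_2_10 cl0_2_10 cl_2_11 cl0_2_11 cl_2_12 cl0_2_12 cl_3_4 cl0_3_4 cl_3_5 cl0_3_5 cl_3_6 cl0_3_6 cl_3_7 cl0_3_7 cl_3_8 cl0_3_8 cl_3_9 cl0_3_9 cl_3_10 cl0_3_10 cl_3_11 cl0_3_11 cl_3_12 cl0_3_12 cl_4_5 cl0_4_5 cl_4_6 cl0_4_6 cl_4_7 cl0_4_7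 cl_4_8 cl0_4_8 cl_4_9 cl0_4_9 cl_4_10 cl0_4_10 cl_4_11 cl0_4_11 cl_4_12 cl0_4_12 cl_5_6 cl0_5_6 cl_5_7 cl0_5_7 cl_5_8 cl0_5_8 cl_5_9 cl0_5_9 cl_5_10 cl0_5_10 cl_5_11 cl0_5_11 cl_5_12 cl0_5_12 cl_6_7 cl0_6_7 cl_6_8 cl0_6_8 cl_6_9 cl0_6_9 cl_6_10 cl0_6_10 cl_6_11 cl0_6_11 cl_6_12 cl0_6_12 cl_7_8 cl0_7_8 cl_7_9 cl0_7_9 cl_7_10 cl0_7_10 cl_7_11 cl0_7_11 cl_7_12 cl0_7_12 cl_8_9 cl0_8_9 cl_8_10 cl0_8_10 cl_8_11 cl0_8_11 cl_8_12 cl0_8_12 cl_9_10 cl0_9_10 cl_9_11 cl0_9_11 cl_9_12 cl0_9_12 cl_10_11 cl0_10_11 cl_10_12 cl0_10_12 cl_11_12 cl0_11_12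

end

definition mul :: "(nat \<Rightarrow> 'a) \<Rightarrow> (nat \<Rightarrow> 'a) \<Rightarrow> nat \<Rightarrow> 'a::field" where
  "mul d e = (\<lambda>i. if i = 1 then (d 1 + e 1) else if i = 2 then (d 2 + e 2) else if i = 3 then (d 3 + e 3) else if i = 4 then (d 4 + e 4) else if i = 5 then (- d 3*e 1 + d 5 + e 5) else if i = 6 then (- d 3*e 2 + d 6 + e 6) else if i = 7 then (- d 4*e 3 + d 7 + e 7) else if i = 8 then (- d 3*e 1*e 2 + d 5*e 2 + d 6*e 1 + d 8 + e 8) else if i = 9 then (- d 3*d 4*e 1 - d 3*e 1*e 4 + d 5*e 4 - d 7*e 1 + d 9 + e 9) else if i = 10 then (d 10 - d 3*d 4*e 2 - d 3*e 2*e 4 + d 6*e 4 - d 7*e 2 + e 10) else if i = 11 then (d 10*e 1 + d 11 - d 3*d 4*e 1*e 2 - d 3*e 1*e 2*e 4 + d 5*e 2*e 4 + d 6*e 1*e 4 - d 7*e 1*e 2 + d 8*e 4 + d 9*e 2 + e 11) else if i = 12 then (d 10*e 1*e 3 + d 10*e 5 + d 11*e 3 + d 12 + d 3*d 3*d 4*e 1*e 2 + d 3*d 3*e 1*e 2*e 4 - d 3*d 4*d 5*e 2 - d 3*d 4*d 6*e 1 - d 3*d 4*e 1*e 2*e 3 - d 3*d 4*e 1*e 6 - d 3*d 4*e 2*e 5 - d 3*d 5*e 2*e 4 - d 3*d 6*e 1*e 4 + d 3*d 7*e 1*e 2 + d 3*e 1*e 2*e 7 - d 3*e 1*e 4*e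 6 - d 3*e 2*e 4*e 5 + d 5*d 6*e 4 - d 5*d 7*e 2 - d 5*e 2*e 7 + d 5*e 4*e 6 - d 6*d 7*e 1 - d 6*e 1*e 7 + d 6*e 4*e 5 - d 7*e 1*e 2*e 3 - d 7*e 1*e 6 - d 7*e 2*e 5 - d 8*e 7 + d 9*e 2*e 3 + d 9*e 6 + e 12) else 0)"

context d4 begin

lemma nf_expand: "nf G x d = x 1 (d 1) \<otimes> (x 2 (d 2) \<otimes> (x 3 (d 3) \<otimes> (x 4 (d 4) \<otimes> (x 5 (d 5) \<otimes> (x 6 (d 6) \<otimes>
   (x 7 (d 7) \<otimes> (x 8 (d 8) \<otimes> (x 9 (d 9) \<otimes> (x 10 (d 10) \<otimes> (x 11 (d 11) \<otimes> x 12 (d 12)))))))))))"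
proof -
  have u: "[1..<13] = [1,2,3,4,5,6,7,8,9,10,11,12::nat]" by (simp add: upt_rec numeral_eq_Suc)
  show ?thesis unfolding nf_def u by simp
qed

lemma mul_hom: "nf G x d \<otimes> nf G x e = nf G x (mul d e)"
  unfolding nf_expand mul_def
  by (simp add: m_assoc coll merge xadd algebra_simps del: One_nat_def)

end

lemma Collect_insert_filter: "{g \<in> insert b A. P g} = (if P b then insert b {g \<in> A. P g} else {g \<in> A. P g})"
  by auto
lemma Collect_empty_filter: "{g \<in> {}. P g} = {}" by auto

lemma pr12: "posroots = {1,2,3,4,5,6,7,8,9,10,11,12}"
  unfolding posroots_def by (simp add: set_eq_iff; presburger)

lemma rc_1: "rc 1 = [1,0,0,0]" by (simp add: rc_def)
lemma rc_2: "rc 2 = [0,1,0,0]" by (simp add: rc_def)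
lemma rc_3: "rc 3 = [0,0,1,0]" by (simp add: rc_def)
lemma rc_4: "rc 4 = [0,0,0,1]" by (simp add: rc_def)
lemma rc_5: "rc 5 = [1,0,1,0]" by (simp add: rc_def)
lemma rc_6: "rc 6 = [0,1,1,0]" by (simp add: rc_def)
lemma rc_7: "rc 7 = [0,0,1,1]" by (simp add: rc_def)
lemma rc_8: "rc 8 = [1,1,1,0]" by (simp add: rc_def)
lemma rc_9: "rc 9 = [1,0,1,1]" by (simp add: rc_def)
lemma rc_10: "rc 10 = [0,1,1,1]" by (simp add: rc_def)
lemma rc_11: "rc 11 = [1,1,1,1]" by (simp add: rc_def)
lemma rc_12: "rc 12 = [1,1,2,1]" by (simp add: rc_def)
lemmas rcs = rc_1 rc_2 rc_3 rc_4 rc_5 rc_6 rc_7 rc_8 rc_9 rc_10 rc_11 rc_12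

lemma hook_1: "hook 1 = {1}"
  unfolding hook_def pr12 Collect_insert_filter Collect_empty_filter by (simp add: rcs del: One_nat_def)
lemma hook_2: "hook 2 = {2}"
  unfolding hook_def pr12 Collect_insert_filter Collect_empty_filter by (simp add: rcs del: One_nat_def)
lemma hook_3: "hook 3 = {3}"
  unfolding hook_def pr12 Collect_insert_filter Collect_empty_filter by (simp add: rcs del: One_nat_def)
lemma hook_4: "hook 4 = {4}"
  unfolding hook_def pr12 Collect_insert_filter Collect_empty_filter by (simp add: rcs del: One_nat_def)
lemma hook_5: "hook 5 = {1,3,5}"
  unfolding hook_def pr12 Collect_insert_filter Collect_empty_filter by (simp add: rcs del: One_nat_def)
lemma hook_6: "hook 6 = {2,3,6}"
  unfolding hook_def pr12 Collect_insert_filter Collect_empty_filter by (simp add: rcs del: One_nat_def)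
lemma hook_7: "hook 7 = {3,4,7}"
  unfolding hook_def pr12 Collect_insert_filter Collect_empty_filter by (simp add: rcs del: One_nat_def)
lemma hook_8: "hook 8 = {1,2,5,6,8}"
  unfolding hook_def pr12 Collect_insert_filter Collect_empty_filter by (simp add: rcs del: One_nat_def)
lemma hook_9: "hook 9 = {1,4,5,7,9}"
  unfolding hook_def pr12 Collect_insert_filter Collect_empty_filter by (simp add: rcs del: One_nat_def)
lemma hook_10: "hook 10 = {2,4,6,7,10}"
  unfolding hook_def pr12 Collect_insert_filter Collect_empty_filter by (simp add: rcs del: One_nat_def)
lemma hook_11: "hook 11 = {1,2,4,8,9,10,11}"
  unfolding hook_def pr12 Collect_insert_filter Collect_empty_filter by (simp add: rcs del: One_nat_def)
lemma hook_12: "hook 12 = {3,5,6,7,8,9,10,11,12}"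
  unfolding hook_def pr12 Collect_insert_filter Collect_empty_filter by (simp add: rcs del: One_nat_def)
lemma leg_1: "leg 1 = {}"
  unfolding leg_def arm_def hook_1 hook_12 by auto
lemma leg_2: "leg 2 = {}"
  unfolding leg_def arm_def hook_2 hook_12 by auto
lemma leg_3: "leg 3 = {}"
  unfolding leg_def arm_def hook_3 hook_12 by auto
lemma leg_4: "leg 4 = {}"
  unfolding leg_def arm_def hook_4 hook_12 by auto
lemma leg_5: "leg 5 = {1}"
  unfolding leg_def arm_def hook_5 hook_12 by auto
lemma leg_6: "leg 6 = {2}"
  unfolding leg_def arm_def hook_6 hook_12 by auto
lemma leg_7: "leg 7 = {4}"
  unfolding leg_def arm_def hook_7 hook_12 by auto
lemma leg_8: "leg 8 = {1,2}"
  unfolding leg_def arm_def hook_8 hook_12 by auto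
lemma leg_9: "leg 9 = {1,4}"
  unfolding leg_def arm_def hook_9 hook_12 by auto
lemma leg_10: "leg 10 = {2,4}"
  unfolding leg_def arm_def hook_10 hook_12 by auto
lemma leg_11: "leg 11 = {1,2,4}"
  unfolding leg_def arm_def hook_11 hook_12 by auto
lemma leg_12: "leg 12 = {3,5,6,7}"
  unfolding leg_def arm_def hook_12 hook_12 by auto
lemma ht_1: "ht 1 = 1" by (simp add: ht_def rcs del: One_nat_def)
lemma ht_2: "ht 2 = 1" by (simp add: ht_def rcs del: One_nat_def)
lemma ht_3: "ht 3 = 1" by (simp add: ht_def rcs del: One_nat_def)
lemma ht_4: "ht 4 = 1" by (simp add: ht_def rcs del: One_nat_def)
lemma ht_5: "ht 5 = 2" by (simp add: ht_def rcs del: One_nat_def)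
lemma ht_6: "ht 6 = 2" by (simp add: ht_def rcs del: One_nat_def)
lemma ht_7: "ht 7 = 2" by (simp add: ht_def rcs del: One_nat_def)
lemma ht_8: "ht 8 = 3" by (simp add: ht_def rcs del: One_nat_def)
lemma ht_9: "ht 9 = 3" by (simp add: ht_def rcs del: One_nat_def)
lemma ht_10: "ht 10 = 3" by (simp add: ht_def rcs del: One_nat_def)
lemma ht_11: "ht 11 = 4" by (simp add: ht_def rcs del: One_nat_def)
lemma ht_12: "ht 12 = 5" by (simp add: ht_def rcs del: One_nat_def)
lemmas hts = ht_1 ht_2 ht_3 ht_4 ht_5 ht_6 ht_7 ht_8 ht_9 ht_10 ht_11 ht_12

locale indrep = group G for G (structure) +
  fixes H and l
  assumes fin: "finite (carrier G)" and sub: "subgroup H G" and lin: "linear_char G H l"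
begin

lemma cancel1: "b \<in> carrier G \<Longrightarrow> c \<in> carrier G \<Longrightarrow> b \<otimes> (inv b \<otimes> c) = c"
  by (simp add: m_assoc[symmetric])
lemma cancel2: "b \<in> carrier G \<Longrightarrow> c \<in> carrier G \<Longrightarrow> inv b \<otimes> (b \<otimes> c) = c"
  by (simp add: m_assoc[symmetric])

lemma Hc: "h \<in> H \<Longrightarrow> h \<in> carrier G" by (rule subgroup.mem_carrier[OF sub])
lemma Hm: "a \<in> H \<Longrightarrow> b \<in> H \<Longrightarrow> a \<otimes> b \<in> H" by (rule subgroup.m_closed[OF sub])
lemma Hi: "a \<in> H \<Longrightarrow> inv a \<in> H" by (rule subgroup.m_inv_closed[OF sub])
lemma H1: "\<one> \<in> H" by (rule subgroup.one_closed[OF sub])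
lemma finH: "finite H" by (rule finite_subset[OF _ fin]) (auto intro: Hc)
lemma cardH: "card H > 0" using finH H1 by (auto simp: card_gt_0_iff)
lemma lmult: "a \<in> H \<Longrightarrow> b \<in> H \<Longrightarrow> l (a \<otimes> b) = l a * l b" using lin unfolding linear_char_def by blast
lemma lnz: "a \<in> H \<Longrightarrow> l a \<noteq> 0" using lin unfolding linear_char_def by blast
lemma l1: "l \<one> = 1"
proof -
  have "l \<one> = l \<one> * l \<one>" using lmult[OF H1 H1] by simp
  then show ?thesis using lnz[OF H1] by simp
qed
lemma linv: "a \<in> H \<Longrightarrow> l (inv a) = inverse (l a)"
proof -
  assume a: "a \<in> H"
  have "l (a \<otimes> inv a) = 1" using a Hc l1 by simp
  then have "l a * l (inv a) = 1" using lmult[OF a Hi[OF a]] by simp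
  from inverse_unique[OF this] show ?thesis by simp
qed

lemma Hiff: "g \<in> carrier G \<Longrightarrow> h \<in> H \<Longrightarrow> (g \<otimes> h \<in> H) = (g \<in> H)"
proof -
  assume g: "g \<in> carrier G" and h: "h \<in> H"
  have hc: "h \<in> carrier G" by (rule Hc[OF h])
  show ?thesis
  proof
    assume "g \<otimes> h \<in> H"
    then have "(g \<otimes> h) \<otimes> inv h \<in> H" using Hm Hi h by simp
    then show "g \<in> H" using g hc by (simp add: m_assoc)
  qed (rule Hm[OF _ h])
qed
lemma Hiff2: "g \<in> carrier G \<Longrightarrow> h \<in> H \<Longrightarrow> (h \<otimes> g \<in> H) = (g \<in> H)"
proof -
  assume g: "g \<in> carrier G" and h: "h \<in> H"
  have hc: "h \<in> carrier G" by (rule Hc[OF h])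
  show ?thesis
  proof
    assume "h \<otimes> g \<in> H"
    then have "inv h \<otimes> (h \<otimes> g) \<in> H" using Hm Hi h by simp
    then show "g \<in> H" using g hc by (simp add: m_assoc[symmetric])
  qed (rule Hm[OF h])
qed

definition l0 where "l0 g = (if g \<in> H then l g else 0)"

lemma l0_mult_right: "g \<in> carrier G \<Longrightarrow> h \<in> H \<Longrightarrow> l0 (g \<otimes> h) = l0 g * l h"
  unfolding l0_def using Hiff lmult by auto

lemma l0_conj: "g \<in> carrier G \<Longrightarrow> h \<in> H \<Longrightarrow> l0 (inv h \<otimes> g \<otimes> h) = l0 g"
proof -
  assume g: "g \<in> carrier G" and h: "h \<in> H"
  have hc: "h \<in> carrier G" using h Hc by blast
  have "l0 (inv h \<otimes> g \<otimes> h) = l0 (inv h \<otimes> g) * l h" using l0_mult_right g h hc by simp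
  also have "l0 (inv h \<otimes> g) = (if g \<in> H then l (inv h) * l g else 0)"
    unfolding l0_def using Hiff2[OF g Hi[OF h]] lmult[OF Hi[OF h]] by auto
  finally show ?thesis using linv[OF h] lnz[OF h] unfolding l0_def by auto
qed

definition cls where "cls g = {h \<in> carrier G. inv g \<otimes> h \<in> H}"

lemma cls_self: "g \<in> carrier G \<Longrightarrow> g \<in> cls g" unfolding cls_def using H1 by simp

lemma cls_eq: assumes g: "g \<in> carrier G" and h: "h \<in> cls g" shows "cls h = cls g"
proof -
  have hc: "h \<in> carrier G" and gh: "inv g \<otimes> h \<in> H" using h unfolding cls_def by auto
  have "inv h \<otimes> k \<in> H \<longleftrightarrow> inv g \<otimes> k \<in> H" if k: "k \<in> carrier G" for k
  proof -
    have e: "inv g \<otimes> k = (inv g \<otimes> h) \<otimes> (inv h \<otimes> k)" using g hc k by (simp add: m_assoc cancel1)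
    show ?thesis unfolding e using Hiff2[of "inv h \<otimes> k" "inv g \<otimes> h"] gh hc k by simp
  qed
  then show ?thesis unfolding cls_def by auto
qed

definition rep where "rep g = (if \<one> \<in> cls g then \<one> else (SOME h. h \<in> cls g))"

lemma rep_in: "g \<in> carrier G \<Longrightarrow> rep g \<in> cls g"
proof -
  assume g: "g \<in> carrier G"
  have "g \<in> cls g" by (rule cls_self[OF g])
  then show ?thesis unfolding rep_def by (auto intro: someI)
qed

lemma cls_sub: "cls g \<subseteq> carrier G" unfolding cls_def by auto

lemma rep_cls: "g \<in> carrier G \<Longrightarrow> cls (rep g) = cls g"
  by (rule cls_eq[OF _ rep_in])

lemma rep_congr: "cls g = cls g' \<Longrightarrow> rep g = rep g'" unfolding rep_def by simp

lemma transversal: "\<exists>ts. distinct ts \<and> ts \<noteq> [] \<and> ts ! 0 = \<one> \<and> set ts \<subseteq> carrier G \<and>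
   (\<forall>g \<in> carrier G. \<exists>!i. i < length ts \<and> inv (ts ! i) \<otimes> g \<in> H)"
proof -
  define T where "T = rep ` carrier G"
  have Tc: "T \<subseteq> carrier G"
  proof
    fix t assume "t \<in> T"
    then obtain g where g: "g \<in> carrier G" "t = rep g" unfolding T_def by (rule imageE)
    show "t \<in> carrier G" using subsetD[OF cls_sub rep_in[OF g(1)]] g(2) by simp
  qed
  have r1: "rep \<one> = \<one>" unfolding rep_def using cls_self[OF one_closed] by simp
  have T1: "\<one> \<in> T" unfolding T_def using r1 one_closed by (metis image_eqI)
  have fT: "finite T" unfolding T_def using fin by (rule finite_imageI)
  obtain xs where xs: "distinct xs" "set xs = T - {\<one>}"
    using finite_distinct_list[of "T - {\<one>}"] fT by auto
  define ts where "ts = \<one> # xs"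
  have ds: "distinct ts" unfolding ts_def using xs by simp
  have sts: "set ts = T" unfolding ts_def using xs T1 by auto
  have ex: "rep g \<in> T \<and> inv (rep g) \<otimes> g \<in> H" if g: "g \<in> carrier G" for g
  proof
    show "rep g \<in> T" unfolding T_def using g by (rule imageI)
    have "g \<in> cls (rep g)" using rep_cls[OF g] cls_self[OF g] by simp
    then show "inv (rep g) \<otimes> g \<in> H" unfolding cls_def by simp
  qed
  have un: "t = rep g" if g: "g \<in> carrier G" and t: "t \<in> T" "inv t \<otimes> g \<in> H" for g t
  proof -
    obtain g1 where g1: "g1 \<in> carrier G" "t = rep g1" using t(1) unfolding T_def by (rule imageE)
    have tc: "t \<in> carrier G" using t(1) Tc by (rule subsetD[rotated])
    have "g \<in> cls t" using t(2) g unfolding cls_def by simp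
    then have "cls g = cls t" by (rule cls_eq[OF tc])
    also have "\<dots> = cls g1" using rep_cls[OF g1(1)] g1(2) by simp
    finally have "cls g = cls g1" .
    from rep_congr[OF this] g1(2) show "t = rep g" by simp
  qed
  have "\<forall>g \<in> carrier G. \<exists>!i. i < length ts \<and> inv (ts ! i) \<otimes> g \<in> H"
  proof
    fix g assume g: "g \<in> carrier G"
    have "rep g \<in> set ts" using ex[OF g] sts by simp
    then obtain i where i: "i < length ts" "ts ! i = rep g" by (metis in_set_conv_nth)
    show "\<exists>!i. i < length ts \<and> inv (ts ! i) \<otimes> g \<in> H"
    proof (rule ex1I[of _ i])
      show "i < length ts \<and> inv (ts ! i) \<otimes> g \<in> H" using i ex[OF g] by simp
    next
      fix j assume j: "j < length ts \<and> inv (ts ! j) \<otimes> g \<in> H"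
      have "ts ! j \<in> T" using j sts nth_mem by metis
      then have "ts ! j = rep g" using un[OF g] j by simp
      then have "ts ! j = ts ! i" using i by simp
      then show "j = i" using nth_eq_iff_index_eq[OF ds, of j i] i j by blast
    qed
  qed
  moreover have "set ts \<subseteq> carrier G" using sts Tc by simp
  moreover have "ts ! 0 = \<one>" "ts \<noteq> []" unfolding ts_def by simp_all
  ultimately show ?thesis using ds by blast
qed


end

definition vsum :: "nat \<Rightarrow> 'c list \<Rightarrow> ('c \<Rightarrow> complex vec) \<Rightarrow> complex vec" where
  "vsum n ks v = foldr (\<lambda>k acc. v k + acc) ks (0\<^sub>v n)"

lemma vsum_carrier: "(\<forall>k \<in> set ks. v k \<in> carrier_vec n) \<Longrightarrow> vsum n ks v \<in> carrier_vec n"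
  unfolding vsum_def by (induction ks) auto

lemma vsum_idx: "(\<forall>k \<in> set ks. v k \<in> carrier_vec n) \<Longrightarrow> i < n \<Longrightarrow> vsum n ks v $ i = (\<Sum>k \<leftarrow> ks. v k $ i)"
proof (induction ks)
  case Nil then show ?case unfolding vsum_def by simp
next
  case (Cons a ks)
  have "vsum n ks v \<in> carrier_vec n" using Cons.prems(1) by (intro vsum_carrier) simp
  then show ?case using Cons unfolding vsum_def by simp
qed

lemma vsum_W: "is_subspace n W \<Longrightarrow> (\<forall>k \<in> set ks. v k \<in> W) \<Longrightarrow> vsum n ks v \<in> W"
  unfolding vsum_def is_subspace_def by (induction ks) auto


locale indrep2 = indrep +
  fixes ts
  assumes ds: "distinct ts" and ne: "ts \<noteq> []" and t0: "ts ! 0 = \<one>"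
    and tsc: "set ts \<subseteq> carrier G"
    and tr: "\<forall>g \<in> carrier G. \<exists>!i. i < length ts \<and> inv (ts ! i) \<otimes> g \<in> H"
begin

abbreviation "n \<equiv> length ts"

lemma tc[simp]: "i < n \<Longrightarrow> ts ! i \<in> carrier G" using tsc nth_mem by (metis subsetD)

lemma npos: "0 < n" using ne by simp

lemma trE: assumes g: "g \<in> carrier G" obtains i where "i < n" "inv (ts ! i) \<otimes> g \<in> H"
  "\<And>j. j < n \<Longrightarrow> inv (ts ! j) \<otimes> g \<in> H \<Longrightarrow> j = i"
  using tr g by metis

lemma cos_iff: assumes i: "i < n" and j: "j < n" shows "(inv (ts ! i) \<otimes> ts ! j \<in> H) = (i = j)"
proof
  assume h: "inv (ts ! i) \<otimes> ts ! j \<in> H"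
  obtain k where k: "k < n" "\<And>m. m < n \<Longrightarrow> inv (ts ! m) \<otimes> ts ! j \<in> H \<Longrightarrow> m = k"
    using trE[OF tc[OF j]] by metis
  have "i = k" using k(2)[OF i h] .
  moreover have "j = k" using k(2)[OF j] H1 tc[OF j] by simp
  ultimately show "i = j" by simp
next
  assume "i = j" then show "inv (ts ! i) \<otimes> ts ! j \<in> H" using H1 tc[OF j] by simp
qed

definition rho where "rho g = mat n n (\<lambda>(i,j). l0 (inv (ts ! i) \<otimes> g \<otimes> ts ! j))"

lemma rho_idx[simp]: "i < n \<Longrightarrow> j < n \<Longrightarrow> rho g $$ (i,j) = l0 (inv (ts ! i) \<otimes> g \<otimes> ts ! j)"
  unfolding rho_def by simp

lemma rho_dim[simp]: "dim_row (rho g) = n" "dim_col (rho g) = n" "rho g \<in> carrier_mat n n"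
  unfolding rho_def by auto

lemma sum_single:
  assumes k0: "k0 < n" and z: "\<And>k. k < n \<Longrightarrow> k \<noteq> k0 \<Longrightarrow> f k = (0::complex)"
  shows "(\<Sum>k \<in> {0..<n}. f k) = f k0"
proof -
  have "(\<Sum>k \<in> {0..<n}. f k) = (\<Sum>k \<in> {0..<n}. if k = k0 then f k0 else 0)"
    by (rule sum.cong) (auto simp: z)
  also have "\<dots> = f k0" using k0 by simp
  finally show ?thesis .
qed

lemma rho_mult: assumes g: "g \<in> carrier G" and h: "h \<in> carrier G"
  shows "rho (g \<otimes> h) = rho g * rho h"
proof (rule eq_matI)
  fix i j assume i: "i < dim_row (rho g * rho h)" and j: "j < dim_col (rho g * rho h)"
  then have i: "i < n" and j: "j < n" by simp_all
  have htj: "h \<otimes> ts ! j \<in> carrier G" using h j by simp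
  obtain k0 where k0: "k0 < n" "inv (ts ! k0) \<otimes> (h \<otimes> ts ! j) \<in> H"
    "\<And>m. m < n \<Longrightarrow> inv (ts ! m) \<otimes> (h \<otimes> ts ! j) \<in> H \<Longrightarrow> m = k0"
    using trE[OF htj] by metis
  have "(rho g * rho h) $$ (i,j) = (\<Sum>k \<in> {0..<n}. l0 (inv (ts ! i) \<otimes> g \<otimes> ts ! k) * l0 (inv (ts ! k) \<otimes> h \<otimes> ts ! j))"
    using i j by (simp add: scalar_prod_def)
  also have "\<dots> = l0 (inv (ts ! i) \<otimes> g \<otimes> ts ! k0) * l0 (inv (ts ! k0) \<otimes> h \<otimes> ts ! j)"
  proof (rule sum_single[OF k0(1)])
    fix k assume k: "k < n" "k \<noteq> k0"
    have "inv (ts ! k) \<otimes> h \<otimes> ts ! j \<notin> H" using k0(3)[OF k(1)] k h j by (auto simp: m_assoc)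
    then show "l0 (inv (ts ! i) \<otimes> g \<otimes> ts ! k) * l0 (inv (ts ! k) \<otimes> h \<otimes> ts ! j) = 0"
      unfolding l0_def by simp
  qed
  also have "\<dots> = l0 (inv (ts ! i) \<otimes> g \<otimes> ts ! k0 \<otimes> (inv (ts ! k0) \<otimes> h \<otimes> ts ! j))"
  proof -
    have "inv (ts ! k0) \<otimes> h \<otimes> ts ! j \<in> H" using k0(2) h j k0(1) by (simp add: m_assoc)
    then show ?thesis using l0_mult_right[of "inv (ts ! i) \<otimes> g \<otimes> ts ! k0"] i g k0(1) unfolding l0_def[of "inv (ts ! k0) \<otimes> h \<otimes> ts ! j"]
      by simp
  qed
  also have "inv (ts ! i) \<otimes> g \<otimes> ts ! k0 \<otimes> (inv (ts ! k0) \<otimes> h \<otimes> ts ! j) = inv (ts ! i) \<otimes> (g \<otimes> h) \<otimes> ts ! j"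
    using i j k0(1) g h by (simp add: m_assoc cancel1)
  finally show "rho (g \<otimes> h) $$ (i,j) = (rho g * rho h) $$ (i,j)" using i j by simp
qed auto

lemma rho_one: "rho \<one> = 1\<^sub>m n"
proof (rule eq_matI)
  fix i j assume "i < dim_row (1\<^sub>m n)" "j < dim_col (1\<^sub>m n)"
  then have i: "i < n" and j: "j < n" by simp_all
  have "l0 (inv (ts ! i) \<otimes> \<one> \<otimes> ts ! j) = (if i = j then 1 else 0)"
    unfolding l0_def using cos_iff[OF i j] i j l1 by simp
  then show "rho \<one> $$ (i,j) = 1\<^sub>m n $$ (i,j)" using i j by simp
qed auto

lemma is_rep_rho: "is_rep G n rho"
  unfolding is_rep_def using rho_mult rho_one by simp

lemma trace_rho: "g \<in> carrier G \<Longrightarrow> mat_trace (rho g) = (\<Sum>i \<in> {0..<n}. l0 (inv (ts ! i) \<otimes> g \<otimes> ts ! i))"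
  unfolding mat_trace_def by (simp add: atLeast0LessThan)

lemma bij_cos: "bij_betw (\<lambda>(i,h). ts ! i \<otimes> h) ({0..<n} \<times> H) (carrier G)"
proof (rule bij_betwI')
  fix p q assume p: "p \<in> {0..<n} \<times> H" and q: "q \<in> {0..<n} \<times> H"
  obtain i h where pi: "p = (i,h)" "i < n" "h \<in> H" using p by auto
  obtain j h' where qj: "q = (j,h')" "j < n" "h' \<in> H" using q by auto
  have hc: "h \<in> carrier G" "h' \<in> carrier G" using pi qj Hc by auto
  show "((\<lambda>(i,h). ts ! i \<otimes> h) p = (\<lambda>(i,h). ts ! i \<otimes> h) q) = (p = q)"
  proof
    assume e: "(\<lambda>(i,h). ts ! i \<otimes> h) p = (\<lambda>(i,h). ts ! i \<otimes> h) q"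
    then have e: "ts ! i \<otimes> h = ts ! j \<otimes> h'" using pi qj by simp
    have "inv (ts ! i) \<otimes> ts ! j = h \<otimes> inv h'"
    proof -
      have "inv (ts ! i) \<otimes> (ts ! i \<otimes> h) \<otimes> inv h' = inv (ts ! i) \<otimes> (ts ! j \<otimes> h') \<otimes> inv h'" using e by simp
      then show ?thesis using pi qj hc by (simp add: m_assoc cancel2 del: r_inv)
    qed
    moreover have "h \<otimes> inv h' \<in> H" using pi qj Hm Hi by simp
    ultimately have ij: "i = j" using cos_iff[OF pi(2) qj(2)] by simp
    then have "h = h'" using e pi qj hc by simp
    then show "p = q" using ij pi qj by simp
  qed simp
next
  fix p assume "p \<in> {0..<n} \<times> H"
  then show "(\<lambda>(i,h). ts ! i \<otimes> h) p \<in> carrier G" using Hc by auto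
next
  fix g assume g: "g \<in> carrier G"
  obtain i where i: "i < n" "inv (ts ! i) \<otimes> g \<in> H" using trE[OF g] by metis
  have "g = ts ! i \<otimes> (inv (ts ! i) \<otimes> g)" using g i by (simp add: cancel1)
  then show "\<exists>p \<in> {0..<n} \<times> H. g = (\<lambda>(i,h). ts ! i \<otimes> h) p" using i
    by (intro bexI[where x="(i, inv (ts ! i) \<otimes> g)"]) auto
qed

lemma induce_eq: assumes g: "g \<in> carrier G"
  shows "induce G H l g = (\<Sum>i \<in> {0..<n}. l0 (inv (ts ! i) \<otimes> g \<otimes> ts ! i))"
proof -
  have "(\<Sum>y \<in> carrier G. l0 (inv y \<otimes> g \<otimes> y)) =
        (\<Sum>p \<in> {0..<n} \<times> H. (\<lambda>y. l0 (inv y \<otimes> g \<otimes> y)) ((\<lambda>(i,h). ts ! i \<otimes> h) p))"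
    by (rule sum.reindex_bij_betw[OF bij_cos, symmetric])
  also have "\<dots> = (\<Sum>p \<in> {0..<n} \<times> H. l0 (inv (ts ! fst p) \<otimes> g \<otimes> ts ! fst p))"
  proof (rule sum.cong[OF refl])
    fix p assume p: "p \<in> {0..<n} \<times> H"
    obtain i h where pi: "p = (i,h)" "i < n" "h \<in> H" using p by auto
    have hc: "h \<in> carrier G" using pi Hc by simp
    have "inv (ts ! i \<otimes> h) \<otimes> g \<otimes> (ts ! i \<otimes> h) = inv h \<otimes> (inv (ts ! i) \<otimes> g \<otimes> ts ! i) \<otimes> h"
      using pi hc g by (simp add: inv_mult_group m_assoc)
    then show "(\<lambda>y. l0 (inv y \<otimes> g \<otimes> y)) ((\<lambda>(i,h). ts ! i \<otimes> h) p) = l0 (inv (ts ! fst p) \<otimes> g \<otimes> ts ! fst p)"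
      using pi l0_conj[of "inv (ts ! i) \<otimes> g \<otimes> ts ! i" h] g by simp
  qed
  also have "\<dots> = (\<Sum>i \<in> {0..<n}. \<Sum>h \<in> H. l0 (inv (ts ! i) \<otimes> g \<otimes> ts ! i))"
    by (rule sum.cartesian_product[of "\<lambda>i h. l0 (inv (ts ! i) \<otimes> g \<otimes> ts ! i)" H "{0..<n}", unfolded split_def, symmetric])
  also have "\<dots> = of_nat (card H) * (\<Sum>i \<in> {0..<n}. l0 (inv (ts ! i) \<otimes> g \<otimes> ts ! i))"
    by (simp add: sum_distrib_left)
  finally have e: "(\<Sum>y \<in> carrier G. l0 (inv y \<otimes> g \<otimes> y)) = of_nat (card H) * (\<Sum>i \<in> {0..<n}. l0 (inv (ts ! i) \<otimes> g \<otimes> ts ! i))" .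
  have "induce G H l g = 1 / of_nat (card H) * (\<Sum>y \<in> carrier G. l0 (inv y \<otimes> g \<otimes> y))"
    unfolding induce_def l0_def using g by simp
  then show ?thesis using e cardH by simp
qed


lemma S_lemma:
  assumes mackey: "\<forall>y \<in> carrier G - H. \<exists>w \<in> H. inv y \<otimes> w \<otimes> y \<in> H \<and> l (inv y \<otimes> w \<otimes> y) \<noteq> l w"
    and i: "i < n" and k: "k < n"
  shows "(\<Sum>h \<in> H. inverse (l h) * l0 (inv (ts ! i) \<otimes> h \<otimes> ts ! k)) = (if i = 0 \<and> k = 0 then of_nat (card H) else 0)"
proof (cases "k = 0")
  case True
  show ?thesis
  proof (cases "i = 0")
    case True
    have "(\<Sum>h \<in> H. inverse (l h) * l0 (inv (ts ! i) \<otimes> h \<otimes> ts ! k)) = (\<Sum>h \<in> H. 1)"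
    proof (rule sum.cong[OF refl])
      fix h assume h: "h \<in> H"
      have "inv (ts ! i) \<otimes> h \<otimes> ts ! k = h" using True \<open>k = 0\<close> t0 h Hc by simp
      then show "inverse (l h) * l0 (inv (ts ! i) \<otimes> h \<otimes> ts ! k) = 1" using h lnz[OF h] unfolding l0_def by simp
    qed
    then show ?thesis using True \<open>k = 0\<close> by simp
  next
    case False
    have "(\<Sum>h \<in> H. inverse (l h) * l0 (inv (ts ! i) \<otimes> h \<otimes> ts ! k)) = (\<Sum>h \<in> H. 0)"
    proof (rule sum.cong[OF refl])
      fix h assume h: "h \<in> H"
      have e: "inv (ts ! i) \<otimes> h \<otimes> ts ! k = inv (ts ! i) \<otimes> h" using \<open>k = 0\<close> t0 h Hc i by simp
      have "inv (ts ! i) \<otimes> ts ! 0 \<notin> H" using cos_iff[OF i npos] False by simp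
      then have "inv (ts ! i) \<notin> H" using t0 i by simp
      then have "inv (ts ! i) \<otimes> h \<notin> H" using Hiff[OF _ h, of "inv (ts ! i)"] i by simp
      then show "inverse (l h) * l0 (inv (ts ! i) \<otimes> h \<otimes> ts ! k) = 0" unfolding e l0_def by simp
    qed
    then show ?thesis using False by simp
  qed
next
  case False
  have tkc: "ts ! k \<in> carrier G" using k by simp
  have "inv (ts ! 0) \<otimes> ts ! k \<notin> H" using cos_iff[OF npos k] False by simp
  then have "ts ! k \<notin> H" using t0 tkc by simp
  then obtain w where w: "w \<in> H" "inv (ts ! k) \<otimes> w \<otimes> ts ! k \<in> H" "l (inv (ts ! k) \<otimes> w \<otimes> ts ! k) \<noteq> l w"
    using mackey tkc by blast
  define w' where "w' = inv (ts ! k) \<otimes> w \<otimes> ts ! k"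
  have wc: "w \<in> carrier G" using w Hc by simp
  define F where "F h = inverse (l h) * l0 (inv (ts ! i) \<otimes> h \<otimes> ts ! k)" for h
  define c where "c = inverse (l w) * l w'"
  have c1: "c \<noteq> 1" unfolding c_def w'_def using w lnz[OF w(1)] by (simp add: field_simps)
  have bij: "bij_betw (\<lambda>h. h \<otimes> w) H H"
  proof (rule bij_betwI')
    fix a b assume "a \<in> H" "b \<in> H" then show "(a \<otimes> w = b \<otimes> w) = (a = b)" using wc Hc by simp
  next
    fix a assume "a \<in> H" then show "a \<otimes> w \<in> H" using w Hm by simp
  next
    fix b assume b: "b \<in> H"
    have "b = (b \<otimes> inv w) \<otimes> w" using b wc Hc by (simp add: m_assoc)
    moreover have "b \<otimes> inv w \<in> H" using b w Hm Hi by simp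
    ultimately show "\<exists>a \<in> H. b = a \<otimes> w" by blast
  qed
  have "(\<Sum>h \<in> H. F h) = (\<Sum>h \<in> H. F (h \<otimes> w))"
    by (rule sum.reindex_bij_betw[OF bij, symmetric])
  also have "\<dots> = (\<Sum>h \<in> H. F h * c)"
  proof (rule sum.cong[OF refl])
    fix h assume h: "h \<in> H"
    have hc: "h \<in> carrier G" using h Hc by simp
    have e: "inv (ts ! i) \<otimes> (h \<otimes> w) \<otimes> ts ! k = (inv (ts ! i) \<otimes> h \<otimes> ts ! k) \<otimes> w'"
      unfolding w'_def using hc wc i k by (simp add: m_assoc cancel1)
    have "l0 (inv (ts ! i) \<otimes> h \<otimes> ts ! k \<otimes> w') = l0 (inv (ts ! i) \<otimes> h \<otimes> ts ! k) * l w'"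
      using l0_mult_right[of "inv (ts ! i) \<otimes> h \<otimes> ts ! k" w'] w(2) hc i k unfolding w'_def by simp
    moreover have "inverse (l (h \<otimes> w)) = inverse (l h) * inverse (l w)" using lmult[OF h w(1)] by simp
    ultimately show "F (h \<otimes> w) = F h * c" unfolding F_def c_def e by simp
  qed
  also have "\<dots> = (\<Sum>h \<in> H. F h) * c" by (simp add: sum_distrib_right)
  finally have "(\<Sum>h \<in> H. F h) * (1 - c) = 0" by (simp add: algebra_simps)
  then have "(\<Sum>h \<in> H. F h) = 0" using c1 by simp
  then show ?thesis unfolding F_def using False by simp
qed

lemma irr: assumes mackey: "\<forall>y \<in> carrier G - H. \<exists>w \<in> H. inv y \<otimes> w \<otimes> y \<in> H \<and> l (inv y \<otimes> w \<otimes> y) \<noteq> l w"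
  shows "irreducible_rep G n rho"
  unfolding irreducible_rep_def
proof (intro conjI allI impI)
  show "is_rep G n rho" by (rule is_rep_rho)
  show "0 < n" by (rule npos)
  fix W assume A: "is_subspace n W \<and> (\<forall>g \<in> carrier G. \<forall>w \<in> W. rho g *\<^sub>v w \<in> W)"
  then have sW: "is_subspace n W" and inv: "\<And>g w. g \<in> carrier G \<Longrightarrow> w \<in> W \<Longrightarrow> rho g *\<^sub>v w \<in> W" by auto
  have Wc: "W \<subseteq> carrier_vec n" and Wsm: "\<And>c v. v \<in> W \<Longrightarrow> c \<cdot>\<^sub>v v \<in> W"
    using sW unfolding is_subspace_def by auto
  show "W = {0\<^sub>v n} \<or> W = carrier_vec n"
  proof (cases "W \<subseteq> {0\<^sub>v n}")
    case True
    then show ?thesis using sW unfolding is_subspace_def by auto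
  next
    case False
    then obtain w where w: "w \<in> W" "w \<noteq> 0\<^sub>v n" by auto
    have wc: "w \<in> carrier_vec n" using w Wc by auto
    obtain j where j: "j < n" "w $ j \<noteq> 0"
    proof (rule ccontr)
      assume "\<not> thesis"
      then have "\<forall>j < n. w $ j = 0" using that by blast
      then have "w = 0\<^sub>v n" using wc by (intro eq_vecI) auto
      then show False using w by simp
    qed
    have tjc: "ts ! j \<in> carrier G" using j by simp
    define u where "u = rho (inv (ts ! j)) *\<^sub>v w"
    have uW: "u \<in> W" unfolding u_def using inv[OF inv_closed[OF tjc] w(1)] .
    have uc: "u \<in> carrier_vec n" unfolding u_def by (rule mult_mat_vec_carrier[OF rho_dim(3) wc])
    have u0: "u $ 0 = w $ j"
    proof -
      have "u $ 0 = (\<Sum>k \<in> {0..<n}. l0 (inv (ts ! 0) \<otimes> inv (ts ! j) \<otimes> ts ! k) * w $ k)"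
        unfolding u_def using npos wc by (simp add: scalar_prod_def)
      also have "\<dots> = l0 (inv (ts ! 0) \<otimes> inv (ts ! j) \<otimes> ts ! j) * w $ j"
      proof (rule sum_single[OF j(1)])
        fix k assume k: "k < n" "k \<noteq> j"
        have "inv (ts ! j) \<otimes> ts ! k \<notin> H" using cos_iff[OF j(1) k(1)] k by auto
        then show "l0 (inv (ts ! 0) \<otimes> inv (ts ! j) \<otimes> ts ! k) * w $ k = 0" using t0 k tjc unfolding l0_def by simp
      qed
      also have "\<dots> = w $ j" using t0 tjc l1 H1 unfolding l0_def by simp
      finally show ?thesis .
    qed
    obtain hs where hs: "distinct hs" "set hs = H" using finite_distinct_list[OF finH] by blast
    define P where "P = vsum n hs (\<lambda>h. inverse (l h) \<cdot>\<^sub>v (rho h *\<^sub>v u))"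
    have PW: "P \<in> W" unfolding P_def
      by (rule vsum_W[OF sW]) (auto intro!: Wsm inv uW simp: hs Hc)
    have Pc: "P \<in> carrier_vec n" using PW Wc by auto
    have Pidx: "P $ i = (if i = 0 then of_nat (card H) * u $ 0 else 0)" if i: "i < n" for i
    proof -
      have "P $ i = (\<Sum>h \<leftarrow> hs. (inverse (l h) \<cdot>\<^sub>v (rho h *\<^sub>v u)) $ i)"
        unfolding P_def by (rule vsum_idx[OF _ i]) (auto simp: mult_mat_vec_carrier[OF rho_dim(3) uc])
      also have "\<dots> = (\<Sum>h \<in> H. (inverse (l h) \<cdot>\<^sub>v (rho h *\<^sub>v u)) $ i)"
        using hs by (simp add: sum_list_distinct_conv_sum_set)
      also have "\<dots> = (\<Sum>h \<in> H. \<Sum>k \<in> {0..<n}. inverse (l h) * l0 (inv (ts ! i) \<otimes> h \<otimes> ts ! k) * u $ k)"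
        using i uc by (simp add: scalar_prod_def sum_distrib_left mult.assoc)
      also have "\<dots> = (\<Sum>k \<in> {0..<n}. \<Sum>h \<in> H. inverse (l h) * l0 (inv (ts ! i) \<otimes> h \<otimes> ts ! k) * u $ k)"
        by (rule sum.swap)
      also have "\<dots> = (\<Sum>k \<in> {0..<n}. (if i = 0 \<and> k = 0 then of_nat (card H) else 0) * u $ k)"
      proof (rule sum.cong[OF refl])
        fix k assume k: "k \<in> {0..<n}"
        have "(\<Sum>h \<in> H. inverse (l h) * l0 (inv (ts ! i) \<otimes> h \<otimes> ts ! k) * u $ k)
            = (\<Sum>h \<in> H. inverse (l h) * l0 (inv (ts ! i) \<otimes> h \<otimes> ts ! k)) * u $ k"
          by (simp add: sum_distrib_right)
        then show "(\<Sum>h \<in> H. inverse (l h) * l0 (inv (ts ! i) \<otimes> h \<otimes> ts ! k) * u $ k)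
            = (if i = 0 \<and> k = 0 then of_nat (card H) else 0) * u $ k"
          using S_lemma[OF mackey i, of k] k by simp
      qed
      also have "\<dots> = (if i = 0 then of_nat (card H) * u $ 0 else 0)"
        using npos by (simp add: if_distrib[of "\<lambda>x. x * _"] sum.delta cong: if_cong)
      finally show ?thesis .
    qed
    define e0 where "e0 = (unit_vec n 0 :: complex vec)"
    have Pe: "P = (of_nat (card H) * w $ j) \<cdot>\<^sub>v e0"
      unfolding e0_def by (rule eq_vecI) (use Pc Pidx u0 npos in auto)
    have e0W: "e0 \<in> W"
    proof -
      have nz: "of_nat (card H) * w $ j \<noteq> (0::complex)" using cardH j by simp
      have ii: "inverse (of_nat (card H) * w $ j) * (of_nat (card H) * w $ j) = (1::complex)"
        by (rule left_inverse[OF nz])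
      have "e0 = inverse (of_nat (card H) * w $ j) \<cdot>\<^sub>v P"
        unfolding Pe smult_smult_assoc ii by simp
      then show ?thesis using Wsm PW by simp
    qed
    have ekW: "unit_vec n k \<in> W" if k: "k < n" for k
    proof -
      have "rho (ts ! k) *\<^sub>v e0 = unit_vec n k"
      proof (rule eq_vecI)
        fix i assume i: "i < dim_vec (unit_vec n k :: complex vec)"
        then have i: "i < n" by simp
        have "(rho (ts ! k) *\<^sub>v e0) $ i = (\<Sum>m \<in> {0..<n}. l0 (inv (ts ! i) \<otimes> ts ! k \<otimes> ts ! m) * e0 $ m)"
          using i unfolding e0_def by (simp add: scalar_prod_def)
        also have "\<dots> = l0 (inv (ts ! i) \<otimes> ts ! k \<otimes> ts ! 0) * e0 $ 0"
          by (rule sum_single[OF npos]) (simp add: e0_def npos ne)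
        also have "\<dots> = (if i = k then 1 else 0)"
          using t0 i k cos_iff[OF i k] l1 npos unfolding e0_def l0_def by simp
        finally show "(rho (ts ! k) *\<^sub>v e0) $ i = unit_vec n k $ i" using i k by simp
      qed simp
      then show ?thesis using inv[OF tc[OF k] e0W] by simp
    qed
    have "carrier_vec n \<subseteq> W"
    proof
      fix v :: "complex vec" assume v: "v \<in> carrier_vec n"
      have vc: "vsum n [0..<n] (\<lambda>k. v $ k \<cdot>\<^sub>v unit_vec n k) \<in> carrier_vec n"
        by (intro vsum_carrier) auto
      have "v = vsum n [0..<n] (\<lambda>k. v $ k \<cdot>\<^sub>v unit_vec n k)"
      proof (rule eq_vecI)
        fix i assume i: "i < dim_vec (vsum n [0..<n] (\<lambda>k. v $ k \<cdot>\<^sub>v unit_vec n k))"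
        then have i: "i < n" using vc by simp
        have "vsum n [0..<n] (\<lambda>k. v $ k \<cdot>\<^sub>v unit_vec n k) $ i = (\<Sum>k \<leftarrow> [0..<n]. (v $ k \<cdot>\<^sub>v unit_vec n k) $ i)"
          by (rule vsum_idx[OF _ i]) auto
        also have "\<dots> = (\<Sum>k \<in> {0..<n}. v $ k * (if i = k then 1 else 0))"
          using i by (simp add: sum_list_distinct_conv_sum_set cong: if_cong)
        also have "\<dots> = (\<Sum>k \<in> {0..<n}. (if k = i then v $ k else 0))"
          by (rule sum.cong) auto
        also have "\<dots> = v $ i" using i by simp
        finally show "v $ i = vsum n [0..<n] (\<lambda>k. v $ k \<cdot>\<^sub>v unit_vec n k) $ i" by simp
      next
        show "dim_vec v = dim_vec (vsum n [0..<n] (\<lambda>k. v $ k \<cdot>\<^sub>v unit_vec n k))"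
          using v vc by simp
      qed
      also have "\<dots> \<in> W" by (rule vsum_W[OF sW]) (auto intro!: Wsm ekW)
      finally show "v \<in> W" .
    qed
    then show ?thesis using Wc by auto
  qed
qed

lemma irr_char: assumes mackey: "\<forall>y \<in> carrier G - H. \<exists>w \<in> H. inv y \<otimes> w \<otimes> y \<in> H \<and> l (inv y \<otimes> w \<otimes> y) \<noteq> l w"
  shows "irreducible_char G (induce G H l)"
  unfolding irreducible_char_def
proof (intro exI conjI ballI)
  show "irreducible_rep G n rho" by (rule irr[OF mackey])
  fix g assume g: "g \<in> carrier G"
  show "induce G H l g = mat_trace (rho g)" using trace_rho[OF g] induce_eq[OF g] by simp
qed

end

context indrep begin

lemma irr_char_main:
  assumes mackey: "\<forall>y \<in> carrier G - H. \<exists>w \<in> H. inv y \<otimes> w \<otimes> y \<in> H \<and> l (inv y \<otimes> w \<otimes> y) \<noteq> l w"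
  shows "irreducible_char G (induce G H l)"
proof -
  obtain ts where ts: "distinct ts" "ts \<noteq> []" "ts ! 0 = \<one>" "set ts \<subseteq> carrier G"
     "\<forall>g \<in> carrier G. \<exists>!i. i < length ts \<and> inv (ts ! i) \<otimes> g \<in> H"
    using transversal by blast
  interpret I2: indrep2 G H l ts
    by (unfold_locales) (use ts in auto)
  show ?thesis by (rule I2.irr_char[OF mackey])
qed

lemma induce_one: "induce G H l \<one> = of_nat (card (carrier G)) / of_nat (card H)"
proof -
  have "(\<Sum>y \<in> carrier G. (if inv y \<otimes> \<one> \<otimes> y \<in> H then l (inv y \<otimes> \<one> \<otimes> y) else 0)) = (\<Sum>y \<in> carrier G. 1)"
    by (rule sum.cong[OF refl]) (simp add: H1 l1)
  then show ?thesis unfolding induce_def by simp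
qed

lemma induce_one_nz: "induce G H l \<one> \<noteq> 0"
proof -
  have "card (carrier G) > 0" using fin by (auto simp: card_gt_0_iff)
  then show ?thesis unfolding induce_one using cardH by simp
qed

lemma induce_const: assumes g: "g \<in> carrier G"
  and c: "\<And>y. y \<in> carrier G \<Longrightarrow> inv y \<otimes> g \<otimes> y \<in> H \<and> l (inv y \<otimes> g \<otimes> y) = c"
  shows "induce G H l g = induce G H l \<one> * c"
proof -
  have "(\<Sum>y \<in> carrier G. (if inv y \<otimes> g \<otimes> y \<in> H then l (inv y \<otimes> g \<otimes> y) else 0)) = (\<Sum>y \<in> carrier G. c)"
    by (rule sum.cong[OF refl]) (simp add: c)
  then show ?thesis unfolding induce_def induce_one[unfolded induce_def] using g by simp
qed

end

declare One_nat_def [simp del]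

definition invc :: "(nat \<Rightarrow> 'a) \<Rightarrow> nat \<Rightarrow> 'a::field" where
  "invc d = (\<lambda>i. if i = 1 then (- d 1) else if i = 2 then (- d 2) else if i = 3 then (- d 3) else if i = 4 then (- d 4) else if i = 5 then (- d 1*d 3 - d 5) else if i = 6 then (- d 2*d 3 - d 6) else if i = 7 then (- d 3*d 4 - d 7) else if i = 8 then (d 1*d 2*d 3 + d 1*d 6 + d 2*d 5 - d 8) else if i = 9 then (- d 1*d 7 + d 4*d 5 - d 9) else if i = 10 then (- d 10 - d 2*d 7 + d 4*d 6) else if i = 11 then (d 1*d 10 + d 1*d 2*d 7 - d 1*d 4*d 6 - d 11 - d 2*d 4*d 5 + d 2*d 9 + d 4*d 8) else if i = 12 then (d 1*d 2*d 3*d 7 + d 1*d 6*d 7 + d 10*d 5 + d 11*d 3 - d 12 + d 2*d 5*d 7 - d 3*d 4*d 8 - d 4*d 5*d 6 + d 6*d 9 - d 7*d 8) else 0)"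

definition cj :: "nat \<Rightarrow> 'a \<Rightarrow> (nat \<Rightarrow> 'a) \<Rightarrow> nat \<Rightarrow> 'a::field" where
  "cj b v d = (\<lambda>i. if b = 1 then (if i = 1 then (v) else if i = 5 then (d 3*v) else if i = 8 then (- d 6*v) else if i = 9 then (d 3*d 4*v + d 7*v) else if i = 11 then (- d 10*v) else if i = 12 then (- d 10*d 3*v + d 3*d 4*d 6*v + d 6*d 7*v) else 0)
    else if b = 2 then (if i = 2 then (v) else if i = 6 then (d 3*v) else if i = 8 then (- d 5*v) else if i = 10 then (d 3*d 4*v + d 7*v) else if i = 11 then (- d 9*v) else if i = 12 then (d 3*d 4*d 5*v - d 3*d 9*v + d 5*d 7*v) else 0)
    else if b = 3 then (if i = 3 then (v) else if i = 5 then (- d 1*v) else if i = 6 then (- d 2*v) else if i = 7 then (d 4*v) else if i = 8 then (- d 1*d 2*v) else if i = 9 then (- d 1*d 4*v) else if i = 10 then (- d 2*d 4*v) else if i = 11 then (- d 1*d 2*d 4*v) else if i = 12 then (d 1*d 10*v + d 1*d 2*d 4*v*v + d 1*d 2*d 7*v - d 1*d 4*d 6*v - d 11*v - d 2*d 4*d 5*v + d 2*d 9*v + d 4*d 8*v) else 0)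
    else if b = 4 then (if i = 4 then (v) else if i = 7 then (- d 3*v) else if i = 9 then (- d 5*v) else if i = 10 then (- d 6*v) else if i = 11 then (- d 8*v) else if i = 12 then (- d 3*d 8*v - d 5*d 6*v) else 0)
    else if b = 5 then (if i = 5 then (v) else if i = 8 then (d 2*v) else if i = 9 then (d 4*v) else if i = 11 then (d 2*d 4*v) else if i = 12 then (- d 10*v - d 2*d 7*v + d 4*d 6*v) else 0)
    else if b = 6 then (if i = 6 then (v) else if i = 8 then (d 1*v) else if i = 10 then (d 4*v) else if i = 11 then (d 1*d 4*v) else if i = 12 then (- d 1*d 7*v + d 4*d 5*v - d 9*v) else 0)
    else if b = 7 then (if i = 7 then (v) else if i = 9 then (- d 1*v) else if i = 10 then (- d 2*v) else if i = 11 then (- d 1*d 2*v) else if i = 12 then (- d 1*d 2*d 3*v - d 1*d 6*v - d 2*d 5*v + d 8*v) else 0)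
    else if b = 8 then (if i = 8 then (v) else if i = 11 then (d 4*v) else if i = 12 then (- d 7*v) else 0)
    else if b = 9 then (if i = 9 then (v) else if i = 11 then (d 2*v) else if i = 12 then (d 2*d 3*v + d 6*v) else 0)
    else if b = 10 then (if i = 10 then (v) else if i = 11 then (d 1*v) else if i = 12 then (d 1*d 3*v + d 5*v) else 0)
    else if b = 11 then (if i = 11 then (v) else if i = 12 then (d 3*v) else 0)
    else if b = 12 then (if i = 12 then (v) else 0)
    else 0)"

definition dl :: "nat \<Rightarrow> 'a \<Rightarrow> nat \<Rightarrow> 'a::zero" where "dl b v = (\<lambda>i. if i = b then v else 0)"

context d4 begin

lemma nf_cong: "(\<And>i. 1 \<le> i \<Longrightarrow> i \<le> 12 \<Longrightarrow> p i = q i) \<Longrightarrow> nf G x p = nf G x q"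
  unfolding nf_expand by simp

lemma nf_cong12: "p 1 = q 1 \<Longrightarrow> p 2 = q 2 \<Longrightarrow> p 3 = q 3 \<Longrightarrow> p 4 = q 4 \<Longrightarrow> p 5 = q 5 \<Longrightarrow> p 6 = q 6 \<Longrightarrow>
  p 7 = q 7 \<Longrightarrow> p 8 = q 8 \<Longrightarrow> p 9 = q 9 \<Longrightarrow> p 10 = q 10 \<Longrightarrow> p 11 = q 11 \<Longrightarrow> p 12 = q 12 \<Longrightarrow> nf G x p = nf G x q"
  unfolding nf_expand by simp

lemma nf_closed: "nf G x d \<in> carrier G" unfolding nf_expand by simp

lemma nf_zero: "nf G x (\<lambda>_. 0) = \<one>" unfolding nf_expand by simp

lemma nf_inv: "inv (nf G x d) = nf G x (invc d)"
proof -
  have "nf G x (invc d) \<otimes> nf G x d = nf G x (\<lambda>_. 0)"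
    unfolding mul_hom by (rule nf_cong12) (simp_all add: mul_def invc_def algebra_simps)
  then show ?thesis using nf_zero nf_closed by (simp add: inv_equality)
qed

lemma nf_dl: "1 \<le> b \<Longrightarrow> b \<le> 12 \<Longrightarrow> nf G x (dl b v) = x b v"
proof -
  assume "1 \<le> b" "b \<le> 12"
  then have "b \<in> {1..12}" by simp
  also have "{1..12} = {1,2,3,4,5,6,7,8,9,10,11,12::nat}" by (simp add: set_eq_iff; presburger)
  finally show ?thesis unfolding nf_expand dl_def by (elim insertE; simp)
qed

lemma set12: "1 \<le> b \<Longrightarrow> b \<le> (12::nat) \<Longrightarrow> b \<in> {1,2,3,4,5,6,7,8,9,10,11,12}"
  by (simp; presburger)

lemma cj_mul_1: "nf G x (mul (dl 1 v) d) = nf G x (mul d (cj 1 v d))"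
  by (rule nf_cong12; simp add: mul_def cj_def dl_def algebra_simps)

lemma cj_mul_2: "nf G x (mul (dl 2 v) d) = nf G x (mul d (cj 2 v d))"
  by (rule nf_cong12; simp add: mul_def cj_def dl_def algebra_simps)

lemma cj_mul_3: "nf G x (mul (dl 3 v) d) = nf G x (mul d (cj 3 v d))"
  by (rule nf_cong12; simp add: mul_def cj_def dl_def algebra_simps)

lemma cj_mul_4: "nf G x (mul (dl 4 v) d) = nf G x (mul d (cj 4 v d))"
  by (rule nf_cong12; simp add: mul_def cj_def dl_def algebra_simps)

lemma cj_mul_5: "nf G x (mul (dl 5 v) d) = nf G x (mul d (cj 5 v d))"
  by (rule nf_cong12; simp add: mul_def cj_def dl_def algebra_simps)

lemma cj_mul_6: "nf G x (mul (dl 6 v) d) = nf G x (mul d (cj 6 v d))"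
  by (rule nf_cong12; simp add: mul_def cj_def dl_def algebra_simps)

lemma cj_mul_7: "nf G x (mul (dl 7 v) d) = nf G x (mul d (cj 7 v d))"
  by (rule nf_cong12; simp add: mul_def cj_def dl_def algebra_simps)

lemma cj_mul_8: "nf G x (mul (dl 8 v) d) = nf G x (mul d (cj 8 v d))"
  by (rule nf_cong12; simp add: mul_def cj_def dl_def algebra_simps)

lemma cj_mul_9: "nf G x (mul (dl 9 v) d) = nf G x (mul d (cj 9 v d))"
  by (rule nf_cong12; simp add: mul_def cj_def dl_def algebra_simps)

lemma cj_mul_10: "nf G x (mul (dl 10 v) d) = nf G x (mul d (cj 10 v d))"
  by (rule nf_cong12; simp add: mul_def cj_def dl_def algebra_simps)

lemma cj_mul_11: "nf G x (mul (dl 11 v) d) = nf G x (mul d (cj 11 v d))"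
  by (rule nf_cong12; simp add: mul_def cj_def dl_def algebra_simps)

lemma cj_mul_12: "nf G x (mul (dl 12 v) d) = nf G x (mul d (cj 12 v d))"
  by (rule nf_cong12; simp add: mul_def cj_def dl_def algebra_simps)

lemma cj_mul: assumes "1 \<le> b" "b \<le> 12"
  shows "nf G x (mul (dl b v) d) = nf G x (mul d (cj b v d))"
proof -
  have "b \<in> {1,2,3,4,5,6,7,8,9,10,11,12}" by (rule set12[OF assms])
  then show ?thesis using cj_mul_1 cj_mul_2 cj_mul_3 cj_mul_4 cj_mul_5 cj_mul_6 cj_mul_7 cj_mul_8
    cj_mul_9 cj_mul_10 cj_mul_11 cj_mul_12 by fastforce
qed

lemma conj_x: assumes "1 \<le> b" "b \<le> 12"
  shows "inv (nf G x d) \<otimes> x b v \<otimes> nf G x d = nf G x (cj b v d)"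
proof -
  have "x b v \<otimes> nf G x d = nf G x d \<otimes> nf G x (cj b v d)"
    using cj_mul[OF assms] nf_dl[OF assms] by (simp add: mul_hom[symmetric])
  then show ?thesis using assms nf_closed by (simp add: m_assoc cancel2)
qed


lemma bij_nf: "bij_betw (nf G x) coords (carrier G)" using U unfolding is_U_D4_def by blast

lemma carrier_nf: "g \<in> carrier G \<Longrightarrow> \<exists>d \<in> coords. g = nf G x d"
  using bij_nf unfolding bij_betw_def by auto

definition r12 :: "(nat \<Rightarrow> 'a) \<Rightarrow> nat \<Rightarrow> 'a" where "r12 c = (\<lambda>i. if 1 \<le> i \<and> i \<le> 12 then c i else 0)"

lemma r12_coords: "r12 c \<in> coords" unfolding r12_def coords_def by auto

lemma nf_r12: "nf G x (r12 c) = nf G x c" by (rule nf_cong12) (simp_all add: r12_def)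

lemma finite_coords: "finite (coords :: (nat \<Rightarrow> 'a) set)"
proof -
  have "coords \<subseteq> (\<lambda>f i. if i \<in> {1..12::nat} then f i else (0::'a)) ` (PiE {1..12} (\<lambda>_. UNIV))"
  proof
    fix d :: "nat \<Rightarrow> 'a" assume d: "d \<in> coords"
    have "d = (\<lambda>i. if i \<in> {1..12::nat} then restrict d {1..12} i else 0)"
      using d unfolding coords_def by (auto simp: restrict_def)
    moreover have "restrict d {1..12} \<in> PiE {1..12} (\<lambda>_. UNIV)" by simp
    ultimately show "d \<in> (\<lambda>f i. if i \<in> {1..12::nat} then f i else (0::'a)) ` (PiE {1..12} (\<lambda>_. UNIV))"
      by (rule image_eqI)
  qed
  moreover have "finite (PiE {1..12::nat} (\<lambda>_. UNIV :: 'a set))" by (rule finite_PiE) auto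
  ultimately show ?thesis using finite_subset by blast
qed

lemma fin_carrier: "finite (carrier G)"
proof -
  have "carrier G = nf G x ` coords" using bij_nf unfolding bij_betw_def by simp
  then show ?thesis using finite_coords by simp
qed

definition LZ :: "nat \<Rightarrow> (nat \<Rightarrow> 'a) \<Rightarrow> bool" where "LZ a c \<longleftrightarrow> (\<forall>g \<in> leg a. c g = 0)"

lemma nf_in_V: "LZ a c \<Longrightarrow> nf G x c \<in> Vsub G x a"
proof -
  assume lz: "LZ a c"
  have "r12 c \<in> {d \<in> coords. \<forall>g \<in> leg a. d g = 0}"
    using lz r12_coords unfolding LZ_def r12_def by auto
  then have "nf G x (r12 c) \<in> Vsub G x a" unfolding Vsub_def by (rule imageI)
  then show ?thesis by (simp add: nf_r12)
qed

lemma V_nf: "y \<in> Vsub G x a \<Longrightarrow> \<exists>c. LZ a c \<and> y = nf G x c"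
  unfolding Vsub_def LZ_def by auto

lemma V_carrier: "Vsub G x a \<subseteq> carrier G" using V_nf nf_closed by blast

lemma subgroup_V:
  assumes m: "\<And>c c'. LZ a c \<Longrightarrow> LZ a c' \<Longrightarrow> LZ a (mul c c')"
    and i: "\<And>c. LZ a c \<Longrightarrow> LZ a (invc c)"
  shows "subgroup (Vsub G x a) G"
proof (rule subgroupI)
  show "Vsub G x a \<subseteq> carrier G" by (rule V_carrier)
  have "LZ a (\<lambda>_. 0)" unfolding LZ_def by simp
  then show "Vsub G x a \<noteq> {}" using nf_in_V by blast
next
  fix y assume "y \<in> Vsub G x a"
  then obtain c where c: "LZ a c" "y = nf G x c" using V_nf by blast
  show "inv y \<in> Vsub G x a" unfolding c(2) nf_inv by (rule nf_in_V[OF i[OF c(1)]])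
next
  fix y z assume "y \<in> Vsub G x a" "z \<in> Vsub G x a"
  then obtain c c' where c: "LZ a c" "y = nf G x c" "LZ a c'" "z = nf G x c'" using V_nf by metis
  show "y \<otimes> z \<in> Vsub G x a" unfolding c(2,4) mul_hom by (rule nf_in_V[OF m[OF c(1,3)]])
qed

lemma notin_V: "y \<in> carrier G \<Longrightarrow> y \<notin> Vsub G x a \<Longrightarrow> \<exists>d. y = nf G x d \<and> \<not> LZ a d"
  using carrier_nf nf_in_V by blast

lemma subgroup_V_1: "subgroup (Vsub G x 1) G"
  by (rule subgroup_V) (simp_all add: LZ_def leg_1 mul_def invc_def)
lemma subgroup_V_2: "subgroup (Vsub G x 2) G"
  by (rule subgroup_V) (simp_all add: LZ_def leg_2 mul_def invc_def)
lemma subgroup_V_3: "subgroup (Vsub G x 3) G"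
  by (rule subgroup_V) (simp_all add: LZ_def leg_3 mul_def invc_def)
lemma subgroup_V_4: "subgroup (Vsub G x 4) G"
  by (rule subgroup_V) (simp_all add: LZ_def leg_4 mul_def invc_def)
lemma subgroup_V_5: "subgroup (Vsub G x 5) G"
  by (rule subgroup_V) (simp_all add: LZ_def leg_5 mul_def invc_def)
lemma subgroup_V_6: "subgroup (Vsub G x 6) G"
  by (rule subgroup_V) (simp_all add: LZ_def leg_6 mul_def invc_def)
lemma subgroup_V_7: "subgroup (Vsub G x 7) G"
  by (rule subgroup_V) (simp_all add: LZ_def leg_7 mul_def invc_def)
lemma subgroup_V_8: "subgroup (Vsub G x 8) G"
  by (rule subgroup_V) (simp_all add: LZ_def leg_8 mul_def invc_def)
lemma subgroup_V_9: "subgroup (Vsub G x 9) G"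
  by (rule subgroup_V) (simp_all add: LZ_def leg_9 mul_def invc_def)
lemma subgroup_V_10: "subgroup (Vsub G x 10) G"
  by (rule subgroup_V) (simp_all add: LZ_def leg_10 mul_def invc_def)
lemma subgroup_V_11: "subgroup (Vsub G x 11) G"
  by (rule subgroup_V) (simp_all add: LZ_def leg_11 mul_def invc_def)
lemma subgroup_V_12: "subgroup (Vsub G x 12) G"
  by (rule subgroup_V) (simp_all add: LZ_def leg_12 mul_def invc_def)


end

lemma set12_finite: "{1..12::nat} = {1,2,3,4,5,6,7,8,9,10,11,12}" by (simp add: set_eq_iff; presburger)

locale d4v = d4 +
  fixes a :: nat and l :: "'g \<Rightarrow> complex" and \<psi> :: "'a::{field,finite} \<Rightarrow> complex"
  assumes a12: "1 \<le> a" "a \<le> 12"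
    and subV: "subgroup (Vsub G x a) G" and linV: "linear_char G (Vsub G x a) l"
    and psi_nt: "\<exists>t. \<psi> t \<noteq> 1"
    and restr: "\<And>t. l (x a t) = \<psi> t"
    and ker: "\<And>g t. g \<in> posroots \<Longrightarrow> ht a < ht g \<Longrightarrow> l (x g t) = 1"
begin

sublocale R: indrep G "Vsub G x a" l
  by (intro indrep.intro indrep_axioms.intro grp fin_carrier subV linV)

abbreviation "V \<equiv> Vsub G x a"

lemma xV: "1 \<le> i \<Longrightarrow> i \<le> 12 \<Longrightarrow> i \<notin> leg a \<Longrightarrow> x i t \<in> V"
proof -
  assume h: "1 \<le> i" "i \<le> 12" "i \<notin> leg a"
  have "LZ a (dl i t)" unfolding LZ_def dl_def using h by auto
  then show ?thesis using nf_in_V nf_dl[OF h(1,2)] by metis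
qed

lemma LZ_xV: "LZ a c \<Longrightarrow> 1 \<le> i \<Longrightarrow> i \<le> 12 \<Longrightarrow> x i (c i) \<in> V"
proof -
  assume h: "LZ a c" "1 \<le> i" "i \<le> 12"
  show ?thesis
  proof (cases "i \<in> leg a")
    case True
    then have "c i = 0" using h unfolding LZ_def by simp
    then show ?thesis using h R.H1 by simp
  qed (rule xV[OF h(2,3)])
qed

lemma lam_prod: assumes lz: "LZ a c"
  shows "l (nf G x c) = l (x 1 (c 1)) * (l (x 2 (c 2)) * (l (x 3 (c 3)) * (l (x 4 (c 4)) * (l (x 5 (c 5)) *
    (l (x 6 (c 6)) * (l (x 7 (c 7)) * (l (x 8 (c 8)) * (l (x 9 (c 9)) * (l (x 10 (c 10)) * (l (x 11 (c 11)) *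
     l (x 12 (c 12))))))))))))"
proof -
  have m: "\<And>i. 1 \<le> i \<Longrightarrow> i \<le> 12 \<Longrightarrow> x i (c i) \<in> V" by (rule LZ_xV[OF lz])
  note ms = m[of 1] m[of 2] m[of 3] m[of 4] m[of 5] m[of 6] m[of 7] m[of 8] m[of 9] m[of 10] m[of 11] m[of 12]
  show ?thesis unfolding nf_expand using ms by (simp add: R.lmult R.Hm)
qed

lemma lam_prod_set: assumes lz: "LZ a c"
  shows "l (nf G x c) = (\<Prod>i \<in> {1..12}. l (x i (c i)))"
  unfolding lam_prod[OF lz] set12_finite by simp

lemma lam_comm: assumes "1 \<le> i" "i < j" "j \<le> 12" "i \<notin> leg a" "j \<notin> leg a"
    "cr i j = Some (k, c)" "c = 1 \<or> c = -1"
  shows "l (x k z) = 1"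
proof -
  define t where "t = z * of_int c"
  have cc: "(of_int c :: 'a) * of_int c = 1" using assms(7) by auto
  have e: "comm G (x i t) (x j 1) = x k z"
    using commv[OF assms(1,2,3), of t 1] assms(6) cc unfolding t_def by (simp add: mult.assoc mult.left_commute)
  have vi: "x i t \<in> V" and vj: "x j 1 \<in> V" using xV assms by auto
  have ci: "x i t \<in> carrier G" and cj': "x j 1 \<in> carrier G" using vi vj R.Hc by auto
  have "l (comm G (x i t) (x j 1)) = l (inv (x i t)) * l (inv (x j 1)) * l (x i t) * l (x j 1)"
    unfolding comm_def using vi vj by (simp add: R.lmult R.Hm R.Hi)
  also have "\<dots> = 1"
  proof -
    have "l (x i t) \<noteq> 0" "l (x j 1) \<noteq> 0" using vi vj R.lnz by auto
    moreover have "l (inv (x i t)) * l (inv (x j 1)) * l (x i t) * l (x j 1) =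
       (inverse (l (x i t)) * l (x i t)) * (inverse (l (x j 1)) * l (x j 1))"
      unfolding R.linv[OF vi] R.linv[OF vj] by (simp only: mult_ac)
    ultimately show ?thesis by simp
  qed
  finally show ?thesis using e by simp
qed

lemma K_gen:
  assumes hz: "\<And>(d::nat \<Rightarrow> 'a) (t::'a) i. 1 \<le> i \<Longrightarrow> i \<le> 12 \<Longrightarrow> i \<noteq> a \<Longrightarrow> \<not> ht a < ht i \<Longrightarrow> cj a t d i = 0"
    and ha: "\<And>(d::nat \<Rightarrow> 'a) (t::'a). cj a t d a = t"
    and legs: "\<And>i. i \<in> leg a \<Longrightarrow> 1 \<le> i \<and> i \<le> 12 \<and> i \<noteq> a \<and> \<not> ht a < ht i"
    and y: "y \<in> carrier G"
  shows "inv y \<otimes> x a t \<otimes> y \<in> V \<and> l (inv y \<otimes> x a t \<otimes> y) = \<psi> t"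
proof -
  obtain d where d: "y = nf G x d" using carrier_nf[OF y] by blast
  have e: "inv y \<otimes> x a t \<otimes> y = nf G x (cj a t d)" unfolding d by (rule conj_x[OF a12])
  have lz: "LZ a (cj a t d)" unfolding LZ_def
  proof
    fix g assume "g \<in> leg a"
    then have g: "1 \<le> g" "g \<le> 12" "g \<noteq> a" "\<not> ht a < ht g" using legs by auto
    show "cj a t d g = 0" using g by (intro hz) auto
  qed
  have "l (nf G x (cj a t d)) = (\<Prod>i \<in> {1..12}. l (x i (cj a t d i)))" by (rule lam_prod_set[OF lz])
  also have "\<dots> = (\<Prod>i \<in> {1..12}. if i = a then \<psi> t else 1)"
  proof (rule prod.cong[OF refl])
    fix i assume i: "i \<in> {1..12::nat}"
    show "l (x i (cj a t d i)) = (if i = a then \<psi> t else 1)"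
    proof (cases "i = a")
      case True then show ?thesis using ha restr by simp
    next
      case False
      show ?thesis
      proof (cases "ht a < ht i")
        case True
        have "i \<in> posroots" using i unfolding posroots_def by simp
        then show ?thesis using ker True False by simp
      next
        case nlt: False
        then have "cj a t d i = 0" using hz i False by simp
        then show ?thesis using i False R.l1 by simp
      qed
    qed
  qed
  also have "\<dots> = \<psi> t" using a12 by simp
  finally show ?thesis using e nf_in_V[OF lz] by simp
qed

lemma pick: "z \<noteq> 0 \<Longrightarrow> \<exists>v. \<psi> (z * v) \<noteq> 1"
proof -
  assume z: "z \<noteq> 0"
  obtain t where t: "\<psi> t \<noteq> 1" using psi_nt by blast
  have "z * (t / z) = t" using z by simp
  then show ?thesis using t by metis
qed

lemma M_step:
  assumes b: "1 \<le> b" "b \<le> 12" "b \<notin> leg a" and lz: "LZ a (cj b v d)"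
    and lv: "l (nf G x (cj b v d)) = l (x b v) * \<psi> z" and pz: "\<psi> z \<noteq> 1"
  shows "\<exists>w \<in> V. inv (nf G x d) \<otimes> w \<otimes> nf G x d \<in> V \<and> l (inv (nf G x d) \<otimes> w \<otimes> nf G x d) \<noteq> l w"
proof (rule bexI[of _ "x b v"])
  have e: "inv (nf G x d) \<otimes> x b v \<otimes> nf G x d = nf G x (cj b v d)" by (rule conj_x[OF b(1,2)])
  have xv: "x b v \<in> V" by (rule xV[OF b])
  have "l (x b v) \<noteq> 0" by (rule R.lnz[OF xv])
  then have "l (x b v) * \<psi> z \<noteq> l (x b v)" using pz by simp
  then show "inv (nf G x d) \<otimes> x b v \<otimes> nf G x d \<in> V \<and> l (inv (nf G x d) \<otimes> x b v \<otimes> nf G x d) \<noteq> l (x b v)"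
    unfolding e using nf_in_V[OF lz] lv by simp
  show "x b v \<in> V" by (rule xV[OF b])
qed

lemma K_1: assumes a: "a = 1" and y: "y \<in> carrier G"
  shows "inv y \<otimes> x a t \<otimes> y \<in> V \<and> l (inv y \<otimes> x a t \<otimes> y) = \<psi> t"
proof (rule K_gen[OF _ _ _ y])
  fix d :: "nat \<Rightarrow> 'a" and t :: 'a and i :: nat
  assume h: "1 \<le> i" "i \<le> 12" "i \<noteq> a" "\<not> ht a < ht i"
  then have "i \<in> {1,2,3,4,5,6,7,8,9,10,11,12}" "i \<noteq> 1" "\<not> ht 1 < ht i" using set12 a by auto
  then show "cj a t d i = 0" unfolding a by (elim insertE emptyE) (simp_all add: cj_def hts)
next
  fix d :: "nat \<Rightarrow> 'a" and t :: 'a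
  show "cj a t d a = t" unfolding a by (simp add: cj_def)
next
  fix i assume "i \<in> leg a"
  then show "1 \<le> i \<and> i \<le> 12 \<and> i \<noteq> a \<and> \<not> ht a < ht i" unfolding a leg_1 by (auto simp: hts)
qed

lemma K_2: assumes a: "a = 2" and y: "y \<in> carrier G"
  shows "inv y \<otimes> x a t \<otimes> y \<in> V \<and> l (inv y \<otimes> x a t \<otimes> y) = \<psi> t"
proof (rule K_gen[OF _ _ _ y])
  fix d :: "nat \<Rightarrow> 'a" and t :: 'a and i :: nat
  assume h: "1 \<le> i" "i \<le> 12" "i \<noteq> a" "\<not> ht a < ht i"
  then have "i \<in> {1,2,3,4,5,6,7,8,9,10,11,12}" "i \<noteq> 2" "\<not> ht 2 < ht i" using set12 a by auto
  then show "cj a t d i = 0" unfolding a by (elim insertE emptyE) (simp_all add: cj_def hts)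
next
  fix d :: "nat \<Rightarrow> 'a" and t :: 'a
  show "cj a t d a = t" unfolding a by (simp add: cj_def)
next
  fix i assume "i \<in> leg a"
  then show "1 \<le> i \<and> i \<le> 12 \<and> i \<noteq> a \<and> \<not> ht a < ht i" unfolding a leg_2 by (auto simp: hts)
qed

lemma K_3: assumes a: "a = 3" and y: "y \<in> carrier G"
  shows "inv y \<otimes> x a t \<otimes> y \<in> V \<and> l (inv y \<otimes> x a t \<otimes> y) = \<psi> t"
proof (rule K_gen[OF _ _ _ y])
  fix d :: "nat \<Rightarrow> 'a" and t :: 'a and i :: nat
  assume h: "1 \<le> i" "i \<le> 12" "i \<noteq> a" "\<not> ht a < ht i"
  then have "i \<in> {1,2,3,4,5,6,7,8,9,10,11,12}" "i \<noteq> 3" "\<not> ht 3 < ht i" using set12 a by auto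
  then show "cj a t d i = 0" unfolding a by (elim insertE emptyE) (simp_all add: cj_def hts)
next
  fix d :: "nat \<Rightarrow> 'a" and t :: 'a
  show "cj a t d a = t" unfolding a by (simp add: cj_def)
next
  fix i assume "i \<in> leg a"
  then show "1 \<le> i \<and> i \<le> 12 \<and> i \<noteq> a \<and> \<not> ht a < ht i" unfolding a leg_3 by (auto simp: hts)
qed

lemma K_4: assumes a: "a = 4" and y: "y \<in> carrier G"
  shows "inv y \<otimes> x a t \<otimes> y \<in> V \<and> l (inv y \<otimes> x a t \<otimes> y) = \<psi> t"
proof (rule K_gen[OF _ _ _ y])
  fix d :: "nat \<Rightarrow> 'a" and t :: 'a and i :: nat
  assume h: "1 \<le> i" "i \<le> 12" "i \<noteq> a" "\<not> ht a < ht i"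
  then have "i \<in> {1,2,3,4,5,6,7,8,9,10,11,12}" "i \<noteq> 4" "\<not> ht 4 < ht i" using set12 a by auto
  then show "cj a t d i = 0" unfolding a by (elim insertE emptyE) (simp_all add: cj_def hts)
next
  fix d :: "nat \<Rightarrow> 'a" and t :: 'a
  show "cj a t d a = t" unfolding a by (simp add: cj_def)
next
  fix i assume "i \<in> leg a"
  then show "1 \<le> i \<and> i \<le> 12 \<and> i \<noteq> a \<and> \<not> ht a < ht i" unfolding a leg_4 by (auto simp: hts)
qed

lemma K_5: assumes a: "a = 5" and y: "y \<in> carrier G"
  shows "inv y \<otimes> x a t \<otimes> y \<in> V \<and> l (inv y \<otimes> x a t \<otimes> y) = \<psi> t"
proof (rule K_gen[OF _ _ _ y])
  fix d :: "nat \<Rightarrow> 'a" and t :: 'a and i :: nat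
  assume h: "1 \<le> i" "i \<le> 12" "i \<noteq> a" "\<not> ht a < ht i"
  then have "i \<in> {1,2,3,4,5,6,7,8,9,10,11,12}" "i \<noteq> 5" "\<not> ht 5 < ht i" using set12 a by auto
  then show "cj a t d i = 0" unfolding a by (elim insertE emptyE) (simp_all add: cj_def hts)
next
  fix d :: "nat \<Rightarrow> 'a" and t :: 'a
  show "cj a t d a = t" unfolding a by (simp add: cj_def)
next
  fix i assume "i \<in> leg a"
  then show "1 \<le> i \<and> i \<le> 12 \<and> i \<noteq> a \<and> \<not> ht a < ht i" unfolding a leg_5 by (auto simp: hts)
qed

lemma K_6: assumes a: "a = 6" and y: "y \<in> carrier G"
  shows "inv y \<otimes> x a t \<otimes> y \<in> V \<and> l (inv y \<otimes> x a t \<otimes> y) = \<psi> t"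
proof (rule K_gen[OF _ _ _ y])
  fix d :: "nat \<Rightarrow> 'a" and t :: 'a and i :: nat
  assume h: "1 \<le> i" "i \<le> 12" "i \<noteq> a" "\<not> ht a < ht i"
  then have "i \<in> {1,2,3,4,5,6,7,8,9,10,11,12}" "i \<noteq> 6" "\<not> ht 6 < ht i" using set12 a by auto
  then show "cj a t d i = 0" unfolding a by (elim insertE emptyE) (simp_all add: cj_def hts)
next
  fix d :: "nat \<Rightarrow> 'a" and t :: 'a
  show "cj a t d a = t" unfolding a by (simp add: cj_def)
next
  fix i assume "i \<in> leg a"
  then show "1 \<le> i \<and> i \<le> 12 \<and> i \<noteq> a \<and> \<not> ht a < ht i" unfolding a leg_6 by (auto simp: hts)
qed

lemma K_7: assumes a: "a = 7" and y: "y \<in> carrier G"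
  shows "inv y \<otimes> x a t \<otimes> y \<in> V \<and> l (inv y \<otimes> x a t \<otimes> y) = \<psi> t"
proof (rule K_gen[OF _ _ _ y])
  fix d :: "nat \<Rightarrow> 'a" and t :: 'a and i :: nat
  assume h: "1 \<le> i" "i \<le> 12" "i \<noteq> a" "\<not> ht a < ht i"
  then have "i \<in> {1,2,3,4,5,6,7,8,9,10,11,12}" "i \<noteq> 7" "\<not> ht 7 < ht i" using set12 a by auto
  then show "cj a t d i = 0" unfolding a by (elim insertE emptyE) (simp_all add: cj_def hts)
next
  fix d :: "nat \<Rightarrow> 'a" and t :: 'a
  show "cj a t d a = t" unfolding a by (simp add: cj_def)
next
  fix i assume "i \<in> leg a"
  then show "1 \<le> i \<and> i \<le> 12 \<and> i \<noteq> a \<and> \<not> ht a < ht i" unfolding a leg_7 by (auto simp: hts)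
qed

lemma K_8: assumes a: "a = 8" and y: "y \<in> carrier G"
  shows "inv y \<otimes> x a t \<otimes> y \<in> V \<and> l (inv y \<otimes> x a t \<otimes> y) = \<psi> t"
proof (rule K_gen[OF _ _ _ y])
  fix d :: "nat \<Rightarrow> 'a" and t :: 'a and i :: nat
  assume h: "1 \<le> i" "i \<le> 12" "i \<noteq> a" "\<not> ht a < ht i"
  then have "i \<in> {1,2,3,4,5,6,7,8,9,10,11,12}" "i \<noteq> 8" "\<not> ht 8 < ht i" using set12 a by auto
  then show "cj a t d i = 0" unfolding a by (elim insertE emptyE) (simp_all add: cj_def hts)
next
  fix d :: "nat \<Rightarrow> 'a" and t :: 'a
  show "cj a t d a = t" unfolding a by (simp add: cj_def)
next
  fix i assume "i \<in> leg a"
  then show "1 \<le> i \<and> i \<le> 12 \<and> i \<noteq> a \<and> \<not> ht a < ht i" unfolding a leg_8 by (auto simp: hts)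
qed

lemma K_9: assumes a: "a = 9" and y: "y \<in> carrier G"
  shows "inv y \<otimes> x a t \<otimes> y \<in> V \<and> l (inv y \<otimes> x a t \<otimes> y) = \<psi> t"
proof (rule K_gen[OF _ _ _ y])
  fix d :: "nat \<Rightarrow> 'a" and t :: 'a and i :: nat
  assume h: "1 \<le> i" "i \<le> 12" "i \<noteq> a" "\<not> ht a < ht i"
  then have "i \<in> {1,2,3,4,5,6,7,8,9,10,11,12}" "i \<noteq> 9" "\<not> ht 9 < ht i" using set12 a by auto
  then show "cj a t d i = 0" unfolding a by (elim insertE emptyE) (simp_all add: cj_def hts)
next
  fix d :: "nat \<Rightarrow> 'a" and t :: 'a
  show "cj a t d a = t" unfolding a by (simp add: cj_def)
next
  fix i assume "i \<in> leg a"
  then show "1 \<le> i \<and> i \<le> 12 \<and> i \<noteq> a \<and> \<not> ht a < ht i" unfolding a leg_9 by (auto simp: hts)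
qed

lemma K_10: assumes a: "a = 10" and y: "y \<in> carrier G"
  shows "inv y \<otimes> x a t \<otimes> y \<in> V \<and> l (inv y \<otimes> x a t \<otimes> y) = \<psi> t"
proof (rule K_gen[OF _ _ _ y])
  fix d :: "nat \<Rightarrow> 'a" and t :: 'a and i :: nat
  assume h: "1 \<le> i" "i \<le> 12" "i \<noteq> a" "\<not> ht a < ht i"
  then have "i \<in> {1,2,3,4,5,6,7,8,9,10,11,12}" "i \<noteq> 10" "\<not> ht 10 < ht i" using set12 a by auto
  then show "cj a t d i = 0" unfolding a by (elim insertE emptyE) (simp_all add: cj_def hts)
next
  fix d :: "nat \<Rightarrow> 'a" and t :: 'a
  show "cj a t d a = t" unfolding a by (simp add: cj_def)
next
  fix i assume "i \<in> leg a"
  then show "1 \<le> i \<and> i \<le> 12 \<and> i \<noteq> a \<and> \<not> ht a < ht i" unfolding a leg_10 by (auto simp: hts)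
qed

lemma K_11: assumes a: "a = 11" and y: "y \<in> carrier G"
  shows "inv y \<otimes> x a t \<otimes> y \<in> V \<and> l (inv y \<otimes> x a t \<otimes> y) = \<psi> t"
proof (rule K_gen[OF _ _ _ y])
  fix d :: "nat \<Rightarrow> 'a" and t :: 'a and i :: nat
  assume h: "1 \<le> i" "i \<le> 12" "i \<noteq> a" "\<not> ht a < ht i"
  then have "i \<in> {1,2,3,4,5,6,7,8,9,10,11,12}" "i \<noteq> 11" "\<not> ht 11 < ht i" using set12 a by auto
  then show "cj a t d i = 0" unfolding a by (elim insertE emptyE) (simp_all add: cj_def hts)
next
  fix d :: "nat \<Rightarrow> 'a" and t :: 'a
  show "cj a t d a = t" unfolding a by (simp add: cj_def)
next
  fix i assume "i \<in> leg a"
  then show "1 \<le> i \<and> i \<le> 12 \<and> i \<noteq> a \<and> \<not> ht a < ht i" unfolding a leg_11 by (auto simp: hts)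
qed

lemma K_12: assumes a: "a = 12" and y: "y \<in> carrier G"
  shows "inv y \<otimes> x a t \<otimes> y \<in> V \<and> l (inv y \<otimes> x a t \<otimes> y) = \<psi> t"
proof (rule K_gen[OF _ _ _ y])
  fix d :: "nat \<Rightarrow> 'a" and t :: 'a and i :: nat
  assume h: "1 \<le> i" "i \<le> 12" "i \<noteq> a" "\<not> ht a < ht i"
  then have "i \<in> {1,2,3,4,5,6,7,8,9,10,11,12}" "i \<noteq> 12" "\<not> ht 12 < ht i" using set12 a by auto
  then show "cj a t d i = 0" unfolding a by (elim insertE emptyE) (simp_all add: cj_def hts)
next
  fix d :: "nat \<Rightarrow> 'a" and t :: 'a
  show "cj a t d a = t" unfolding a by (simp add: cj_def)
next
  fix i assume "i \<in> leg a"
  then show "1 \<le> i \<and> i \<le> 12 \<and> i \<noteq> a \<and> \<not> ht a < ht i" unfolding a leg_12 by (auto simp: hts)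
qed

lemma M_1: assumes a: "a = 1"
  shows "\<forall>y \<in> carrier G - V. \<exists>w \<in> V. inv y \<otimes> w \<otimes> y \<in> V \<and> l (inv y \<otimes> w \<otimes> y) \<noteq> l w"
proof
  fix y assume y: "y \<in> carrier G - V"
  then obtain d where d: "y = nf G x d" "\<not> LZ a d" using notin_V by blast
  then show "\<exists>w \<in> V. inv y \<otimes> w \<otimes> y \<in> V \<and> l (inv y \<otimes> w \<otimes> y) \<noteq> l w" unfolding LZ_def a leg_1 by simp
qed

lemma M_2: assumes a: "a = 2"
  shows "\<forall>y \<in> carrier G - V. \<exists>w \<in> V. inv y \<otimes> w \<otimes> y \<in> V \<and> l (inv y \<otimes> w \<otimes> y) \<noteq> l w"
proof
  fix y assume y: "y \<in> carrier G - V"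
  then obtain d where d: "y = nf G x d" "\<not> LZ a d" using notin_V by blast
  then show "\<exists>w \<in> V. inv y \<otimes> w \<otimes> y \<in> V \<and> l (inv y \<otimes> w \<otimes> y) \<noteq> l w" unfolding LZ_def a leg_2 by simp
qed

lemma M_3: assumes a: "a = 3"
  shows "\<forall>y \<in> carrier G - V. \<exists>w \<in> V. inv y \<otimes> w \<otimes> y \<in> V \<and> l (inv y \<otimes> w \<otimes> y) \<noteq> l w"
proof
  fix y assume y: "y \<in> carrier G - V"
  then obtain d where d: "y = nf G x d" "\<not> LZ a d" using notin_V by blast
  then show "\<exists>w \<in> V. inv y \<otimes> w \<otimes> y \<in> V \<and> l (inv y \<otimes> w \<otimes> y) \<noteq> l w" unfolding LZ_def a leg_3 by simp
qed

lemma M_4: assumes a: "a = 4"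
  shows "\<forall>y \<in> carrier G - V. \<exists>w \<in> V. inv y \<otimes> w \<otimes> y \<in> V \<and> l (inv y \<otimes> w \<otimes> y) \<noteq> l w"
proof
  fix y assume y: "y \<in> carrier G - V"
  then obtain d where d: "y = nf G x d" "\<not> LZ a d" using notin_V by blast
  then show "\<exists>w \<in> V. inv y \<otimes> w \<otimes> y \<in> V \<and> l (inv y \<otimes> w \<otimes> y) \<noteq> l w" unfolding LZ_def a leg_4 by simp
qed

lemma M_5: assumes a: "a = 5"
  shows "\<forall>y \<in> carrier G - V. \<exists>w \<in> V. inv y \<otimes> w \<otimes> y \<in> V \<and> l (inv y \<otimes> w \<otimes> y) \<noteq> l w"
proof
  fix y assume y: "y \<in> carrier G - V"
  then obtain d where d: "y = nf G x d" "\<not> LZ a d" using notin_V by blast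
  have nz: "d 1 \<noteq> 0" using d(2) unfolding LZ_def a leg_5 by auto
  have r: "\<And>t. l (x 5 t) = \<psi> t" using restr a by simp
  have k8: "\<And>t. l (x 8 t) = 1" using ker[of 8] a by (simp add: hts posroots_def)
  have k9: "\<And>t. l (x 9 t) = 1" using ker[of 9] a by (simp add: hts posroots_def)
  have k10: "\<And>t. l (x 10 t) = 1" using ker[of 10] a by (simp add: hts posroots_def)
  have k11: "\<And>t. l (x 11 t) = 1" using ker[of 11] a by (simp add: hts posroots_def)
  have k12: "\<And>t. l (x 12 t) = 1" using ker[of 12] a by (simp add: hts posroots_def)
  have c6: "\<And>z. l (x 6 z) = 1" by (rule lam_comm[of 2 3 6 "1"]) (simp_all add: a leg_5 cr_def)
  have c7: "\<And>z. l (x 7 z) = 1" by (rule lam_comm[of 3 4 7 "1"]) (simp_all add: a leg_5 cr_def)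
  note pz = TrueI
  have "\<exists>w \<in> V. inv (nf G x d) \<otimes> w \<otimes> nf G x d \<in> V \<and> l (inv (nf G x d) \<otimes> w \<otimes> nf G x d) \<noteq> l w"
  proof -
    have ng: "d 1 \<noteq> 0" using nz pz by auto
    obtain v where v: "\<psi> ((- d 1) * v) \<noteq> 1" using pick[of "- d 1"] ng by auto
    have lz: "LZ a (cj 3 v d)" unfolding LZ_def a leg_5 using pz by (simp add: cj_def)
    show ?thesis
    proof (rule M_step[OF _ _ _ lz _ v])
      show "1 \<le> (3::nat)" "(3::nat) \<le> 12" "3 \<notin> leg a" by (simp_all add: a leg_5)
      show "l (nf G x (cj 3 v d)) = l (x 3 v) * \<psi> ((- d 1) * v)"
        unfolding lam_prod[OF lz] using pz by (simp add: cj_def R.l1 r k8 k9 k10 k11 k12 c6 c7)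
    qed
  qed
  then show "\<exists>w \<in> V. inv y \<otimes> w \<otimes> y \<in> V \<and> l (inv y \<otimes> w \<otimes> y) \<noteq> l w" using d(1) by simp
qed

lemma M_6: assumes a: "a = 6"
  shows "\<forall>y \<in> carrier G - V. \<exists>w \<in> V. inv y \<otimes> w \<otimes> y \<in> V \<and> l (inv y \<otimes> w \<otimes> y) \<noteq> l w"
proof
  fix y assume y: "y \<in> carrier G - V"
  then obtain d where d: "y = nf G x d" "\<not> LZ a d" using notin_V by blast
  have nz: "d 2 \<noteq> 0" using d(2) unfolding LZ_def a leg_6 by auto
  have r: "\<And>t. l (x 6 t) = \<psi> t" using restr a by simp
  have k8: "\<And>t. l (x 8 t) = 1" using ker[of 8] a by (simp add: hts posroots_def)
  have k9: "\<And>t. l (x 9 t) = 1" using ker[of 9] a by (simp add: hts posroots_def)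
  have k10: "\<And>t. l (x 10 t) = 1" using ker[of 10] a by (simp add: hts posroots_def)
  have k11: "\<And>t. l (x 11 t) = 1" using ker[of 11] a by (simp add: hts posroots_def)
  have k12: "\<And>t. l (x 12 t) = 1" using ker[of 12] a by (simp add: hts posroots_def)
  have c5: "\<And>z. l (x 5 z) = 1" by (rule lam_comm[of 1 3 5 "1"]) (simp_all add: a leg_6 cr_def)
  have c7: "\<And>z. l (x 7 z) = 1" by (rule lam_comm[of 3 4 7 "1"]) (simp_all add: a leg_6 cr_def)
  note pz = TrueI
  have "\<exists>w \<in> V. inv (nf G x d) \<otimes> w \<otimes> nf G x d \<in> V \<and> l (inv (nf G x d) \<otimes> w \<otimes> nf G x d) \<noteq> l w"
  proof -
    have ng: "d 2 \<noteq> 0" using nz pz by auto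
    obtain v where v: "\<psi> ((- d 2) * v) \<noteq> 1" using pick[of "- d 2"] ng by auto
    have lz: "LZ a (cj 3 v d)" unfolding LZ_def a leg_6 using pz by (simp add: cj_def)
    show ?thesis
    proof (rule M_step[OF _ _ _ lz _ v])
      show "1 \<le> (3::nat)" "(3::nat) \<le> 12" "3 \<notin> leg a" by (simp_all add: a leg_6)
      show "l (nf G x (cj 3 v d)) = l (x 3 v) * \<psi> ((- d 2) * v)"
        unfolding lam_prod[OF lz] using pz by (simp add: cj_def R.l1 r k8 k9 k10 k11 k12 c5 c7)
    qed
  qed
  then show "\<exists>w \<in> V. inv y \<otimes> w \<otimes> y \<in> V \<and> l (inv y \<otimes> w \<otimes> y) \<noteq> l w" using d(1) by simp
qed

lemma M_7: assumes a: "a = 7"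
  shows "\<forall>y \<in> carrier G - V. \<exists>w \<in> V. inv y \<otimes> w \<otimes> y \<in> V \<and> l (inv y \<otimes> w \<otimes> y) \<noteq> l w"
proof
  fix y assume y: "y \<in> carrier G - V"
  then obtain d where d: "y = nf G x d" "\<not> LZ a d" using notin_V by blast
  have nz: "d 4 \<noteq> 0" using d(2) unfolding LZ_def a leg_7 by auto
  have r: "\<And>t. l (x 7 t) = \<psi> t" using restr a by simp
  have k8: "\<And>t. l (x 8 t) = 1" using ker[of 8] a by (simp add: hts posroots_def)
  have k9: "\<And>t. l (x 9 t) = 1" using ker[of 9] a by (simp add: hts posroots_def)
  have k10: "\<And>t. l (x 10 t) = 1" using ker[of 10] a by (simp add: hts posroots_def)
  have k11: "\<And>t. l (x 11 t) = 1" using ker[of 11] a by (simp add: hts posroots_def)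
  have k12: "\<And>t. l (x 12 t) = 1" using ker[of 12] a by (simp add: hts posroots_def)
  have c5: "\<And>z. l (x 5 z) = 1" by (rule lam_comm[of 1 3 5 "1"]) (simp_all add: a leg_7 cr_def)
  have c6: "\<And>z. l (x 6 z) = 1" by (rule lam_comm[of 2 3 6 "1"]) (simp_all add: a leg_7 cr_def)
  note pz = TrueI
  have "\<exists>w \<in> V. inv (nf G x d) \<otimes> w \<otimes> nf G x d \<in> V \<and> l (inv (nf G x d) \<otimes> w \<otimes> nf G x d) \<noteq> l w"
  proof -
    have ng: "d 4 \<noteq> 0" using nz pz by auto
    obtain v where v: "\<psi> ((d 4) * v) \<noteq> 1" using pick[of "d 4"] ng by auto
    have lz: "LZ a (cj 3 v d)" unfolding LZ_def a leg_7 using pz by (simp add: cj_def)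
    show ?thesis
    proof (rule M_step[OF _ _ _ lz _ v])
      show "1 \<le> (3::nat)" "(3::nat) \<le> 12" "3 \<notin> leg a" by (simp_all add: a leg_7)
      show "l (nf G x (cj 3 v d)) = l (x 3 v) * \<psi> ((d 4) * v)"
        unfolding lam_prod[OF lz] using pz by (simp add: cj_def R.l1 r k8 k9 k10 k11 k12 c5 c6)
    qed
  qed
  then show "\<exists>w \<in> V. inv y \<otimes> w \<otimes> y \<in> V \<and> l (inv y \<otimes> w \<otimes> y) \<noteq> l w" using d(1) by simp
qed

lemma M_8: assumes a: "a = 8"
  shows "\<forall>y \<in> carrier G - V. \<exists>w \<in> V. inv y \<otimes> w \<otimes> y \<in> V \<and> l (inv y \<otimes> w \<otimes> y) \<noteq> l w"
proof
  fix y assume y: "y \<in> carrier G - V"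
  then obtain d where d: "y = nf G x d" "\<not> LZ a d" using notin_V by blast
  have nz: "d 1 \<noteq> 0 \<or> d 2 \<noteq> 0" using d(2) unfolding LZ_def a leg_8 by auto
  have r: "\<And>t. l (x 8 t) = \<psi> t" using restr a by simp
  have k11: "\<And>t. l (x 11 t) = 1" using ker[of 11] a by (simp add: hts posroots_def)
  have k12: "\<And>t. l (x 12 t) = 1" using ker[of 12] a by (simp add: hts posroots_def)
  have c10: "\<And>z. l (x 10 z) = 1" by (rule lam_comm[of 4 6 10 "-1"]) (simp_all add: a leg_8 cr_def)
  have c9: "\<And>z. l (x 9 z) = 1" by (rule lam_comm[of 4 5 9 "-1"]) (simp_all add: a leg_8 cr_def)
  note pz = TrueI
  have "\<exists>w \<in> V. inv (nf G x d) \<otimes> w \<otimes> nf G x d \<in> V \<and> l (inv (nf G x d) \<otimes> w \<otimes> nf G x d) \<noteq> l w"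
  proof -
    show ?thesis
    proof (cases "d 1 = 0")
      case False
      then have ng: "d 1 \<noteq> 0" by simp
      obtain v where v: "\<psi> ((d 1) * v) \<noteq> 1" using pick[of "d 1"] ng by auto
      have lz: "LZ a (cj 6 v d)" unfolding LZ_def a leg_8 using pz by (simp add: cj_def)
      show ?thesis
      proof (rule M_step[OF _ _ _ lz _ v])
        show "1 \<le> (6::nat)" "(6::nat) \<le> 12" "6 \<notin> leg a" by (simp_all add: a leg_8)
        show "l (nf G x (cj 6 v d)) = l (x 6 v) * \<psi> ((d 1) * v)"
          unfolding lam_prod[OF lz] using pz by (simp add: cj_def R.l1 r k11 k12 c10 c9)
      qed
    next
      case True
      note pz = pz True
      have ng: "d 2 \<noteq> 0" using nz pz by auto
      obtain v where v: "\<psi> ((d 2) * v) \<noteq> 1" using pick[of "d 2"] ng by auto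
      have lz: "LZ a (cj 5 v d)" unfolding LZ_def a leg_8 using pz by (simp add: cj_def)
      show ?thesis
      proof (rule M_step[OF _ _ _ lz _ v])
        show "1 \<le> (5::nat)" "(5::nat) \<le> 12" "5 \<notin> leg a" by (simp_all add: a leg_8)
        show "l (nf G x (cj 5 v d)) = l (x 5 v) * \<psi> ((d 2) * v)"
          unfolding lam_prod[OF lz] using pz by (simp add: cj_def R.l1 r k11 k12 c10 c9)
      qed
    qed
  qed
  then show "\<exists>w \<in> V. inv y \<otimes> w \<otimes> y \<in> V \<and> l (inv y \<otimes> w \<otimes> y) \<noteq> l w" using d(1) by simp
qed

lemma M_9: assumes a: "a = 9"
  shows "\<forall>y \<in> carrier G - V. \<exists>w \<in> V. inv y \<otimes> w \<otimes> y \<in> V \<and> l (inv y \<otimes> w \<otimes> y) \<noteq> l w"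
proof
  fix y assume y: "y \<in> carrier G - V"
  then obtain d where d: "y = nf G x d" "\<not> LZ a d" using notin_V by blast
  have nz: "d 1 \<noteq> 0 \<or> d 4 \<noteq> 0" using d(2) unfolding LZ_def a leg_9 by auto
  have r: "\<And>t. l (x 9 t) = \<psi> t" using restr a by simp
  have k11: "\<And>t. l (x 11 t) = 1" using ker[of 11] a by (simp add: hts posroots_def)
  have k12: "\<And>t. l (x 12 t) = 1" using ker[of 12] a by (simp add: hts posroots_def)
  have c10: "\<And>z. l (x 10 z) = 1" by (rule lam_comm[of 2 7 10 "1"]) (simp_all add: a leg_9 cr_def)
  have c8: "\<And>z. l (x 8 z) = 1" by (rule lam_comm[of 2 5 8 "-1"]) (simp_all add: a leg_9 cr_def)
  note pz = TrueI
  have "\<exists>w \<in> V. inv (nf G x d) \<otimes> w \<otimes> nf G x d \<in> V \<and> l (inv (nf G x d) \<otimes> w \<otimes> nf G x d) \<noteq> l w"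
  proof -
    show ?thesis
    proof (cases "d 1 = 0")
      case False
      then have ng: "d 1 \<noteq> 0" by simp
      obtain v where v: "\<psi> ((- d 1) * v) \<noteq> 1" using pick[of "- d 1"] ng by auto
      have lz: "LZ a (cj 7 v d)" unfolding LZ_def a leg_9 using pz by (simp add: cj_def)
      show ?thesis
      proof (rule M_step[OF _ _ _ lz _ v])
        show "1 \<le> (7::nat)" "(7::nat) \<le> 12" "7 \<notin> leg a" by (simp_all add: a leg_9)
        show "l (nf G x (cj 7 v d)) = l (x 7 v) * \<psi> ((- d 1) * v)"
          unfolding lam_prod[OF lz] using pz by (simp add: cj_def R.l1 r k11 k12 c10 c8)
      qed
    next
      case True
      note pz = pz True
      have ng: "d 4 \<noteq> 0" using nz pz by auto
      obtain v where v: "\<psi> ((d 4) * v) \<noteq> 1" using pick[of "d 4"] ng by auto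
      have lz: "LZ a (cj 5 v d)" unfolding LZ_def a leg_9 using pz by (simp add: cj_def)
      show ?thesis
      proof (rule M_step[OF _ _ _ lz _ v])
        show "1 \<le> (5::nat)" "(5::nat) \<le> 12" "5 \<notin> leg a" by (simp_all add: a leg_9)
        show "l (nf G x (cj 5 v d)) = l (x 5 v) * \<psi> ((d 4) * v)"
          unfolding lam_prod[OF lz] using pz by (simp add: cj_def R.l1 r k11 k12 c10 c8)
      qed
    qed
  qed
  then show "\<exists>w \<in> V. inv y \<otimes> w \<otimes> y \<in> V \<and> l (inv y \<otimes> w \<otimes> y) \<noteq> l w" using d(1) by simp
qed

lemma M_10: assumes a: "a = 10"
  shows "\<forall>y \<in> carrier G - V. \<exists>w \<in> V. inv y \<otimes> w \<otimes> y \<in> V \<and> l (inv y \<otimes> w \<otimes> y) \<noteq> l w"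
proof
  fix y assume y: "y \<in> carrier G - V"
  then obtain d where d: "y = nf G x d" "\<not> LZ a d" using notin_V by blast
  have nz: "d 2 \<noteq> 0 \<or> d 4 \<noteq> 0" using d(2) unfolding LZ_def a leg_10 by auto
  have r: "\<And>t. l (x 10 t) = \<psi> t" using restr a by simp
  have k11: "\<And>t. l (x 11 t) = 1" using ker[of 11] a by (simp add: hts posroots_def)
  have k12: "\<And>t. l (x 12 t) = 1" using ker[of 12] a by (simp add: hts posroots_def)
  have c9: "\<And>z. l (x 9 z) = 1" by (rule lam_comm[of 1 7 9 "1"]) (simp_all add: a leg_10 cr_def)
  have c8: "\<And>z. l (x 8 z) = 1" by (rule lam_comm[of 1 6 8 "-1"]) (simp_all add: a leg_10 cr_def)
  note pz = TrueI
  have "\<exists>w \<in> V. inv (nf G x d) \<otimes> w \<otimes> nf G x d \<in> V \<and> l (inv (nf G x d) \<otimes> w \<otimes> nf G x d) \<noteq> l w"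
  proof -
    show ?thesis
    proof (cases "d 2 = 0")
      case False
      then have ng: "d 2 \<noteq> 0" by simp
      obtain v where v: "\<psi> ((- d 2) * v) \<noteq> 1" using pick[of "- d 2"] ng by auto
      have lz: "LZ a (cj 7 v d)" unfolding LZ_def a leg_10 using pz by (simp add: cj_def)
      show ?thesis
      proof (rule M_step[OF _ _ _ lz _ v])
        show "1 \<le> (7::nat)" "(7::nat) \<le> 12" "7 \<notin> leg a" by (simp_all add: a leg_10)
        show "l (nf G x (cj 7 v d)) = l (x 7 v) * \<psi> ((- d 2) * v)"
          unfolding lam_prod[OF lz] using pz by (simp add: cj_def R.l1 r k11 k12 c9 c8)
      qed
    next
      case True
      note pz = pz True
      have ng: "d 4 \<noteq> 0" using nz pz by auto
      obtain v where v: "\<psi> ((d 4) * v) \<noteq> 1" using pick[of "d 4"] ng by auto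
      have lz: "LZ a (cj 6 v d)" unfolding LZ_def a leg_10 using pz by (simp add: cj_def)
      show ?thesis
      proof (rule M_step[OF _ _ _ lz _ v])
        show "1 \<le> (6::nat)" "(6::nat) \<le> 12" "6 \<notin> leg a" by (simp_all add: a leg_10)
        show "l (nf G x (cj 6 v d)) = l (x 6 v) * \<psi> ((d 4) * v)"
          unfolding lam_prod[OF lz] using pz by (simp add: cj_def R.l1 r k11 k12 c9 c8)
      qed
    qed
  qed
  then show "\<exists>w \<in> V. inv y \<otimes> w \<otimes> y \<in> V \<and> l (inv y \<otimes> w \<otimes> y) \<noteq> l w" using d(1) by simp
qed

lemma M_11: assumes a: "a = 11"
  shows "\<forall>y \<in> carrier G - V. \<exists>w \<in> V. inv y \<otimes> w \<otimes> y \<in> V \<and> l (inv y \<otimes> w \<otimes> y) \<noteq> l w"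
proof
  fix y assume y: "y \<in> carrier G - V"
  then obtain d where d: "y = nf G x d" "\<not> LZ a d" using notin_V by blast
  have nz: "d 1 \<noteq> 0 \<or> d 2 \<noteq> 0 \<or> d 4 \<noteq> 0" using d(2) unfolding LZ_def a leg_11 by auto
  have r: "\<And>t. l (x 11 t) = \<psi> t" using restr a by simp
  have k12: "\<And>t. l (x 12 t) = 1" using ker[of 12] a by (simp add: hts posroots_def)
  note pz = TrueI
  have "\<exists>w \<in> V. inv (nf G x d) \<otimes> w \<otimes> nf G x d \<in> V \<and> l (inv (nf G x d) \<otimes> w \<otimes> nf G x d) \<noteq> l w"
  proof -
    show ?thesis
    proof (cases "d 1 = 0")
      case False
      then have ng: "d 1 \<noteq> 0" by simp
      obtain v where v: "\<psi> ((d 1) * v) \<noteq> 1" using pick[of "d 1"] ng by auto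
      have lz: "LZ a (cj 10 v d)" unfolding LZ_def a leg_11 using pz by (simp add: cj_def)
      show ?thesis
      proof (rule M_step[OF _ _ _ lz _ v])
        show "1 \<le> (10::nat)" "(10::nat) \<le> 12" "10 \<notin> leg a" by (simp_all add: a leg_11)
        show "l (nf G x (cj 10 v d)) = l (x 10 v) * \<psi> ((d 1) * v)"
          unfolding lam_prod[OF lz] using pz by (simp add: cj_def R.l1 r k12)
      qed
    next
      case True
      note pz = pz True
      show ?thesis
      proof (cases "d 2 = 0")
        case False
        then have ng: "d 2 \<noteq> 0" by simp
        obtain v where v: "\<psi> ((d 2) * v) \<noteq> 1" using pick[of "d 2"] ng by auto
        have lz: "LZ a (cj 9 v d)" unfolding LZ_def a leg_11 using pz by (simp add: cj_def)
        show ?thesis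
        proof (rule M_step[OF _ _ _ lz _ v])
          show "1 \<le> (9::nat)" "(9::nat) \<le> 12" "9 \<notin> leg a" by (simp_all add: a leg_11)
          show "l (nf G x (cj 9 v d)) = l (x 9 v) * \<psi> ((d 2) * v)"
            unfolding lam_prod[OF lz] using pz by (simp add: cj_def R.l1 r k12)
        qed
      next
        case True
        note pz = pz True
        have ng: "d 4 \<noteq> 0" using nz pz by auto
        obtain v where v: "\<psi> ((d 4) * v) \<noteq> 1" using pick[of "d 4"] ng by auto
        have lz: "LZ a (cj 8 v d)" unfolding LZ_def a leg_11 using pz by (simp add: cj_def)
        show ?thesis
        proof (rule M_step[OF _ _ _ lz _ v])
          show "1 \<le> (8::nat)" "(8::nat) \<le> 12" "8 \<notin> leg a" by (simp_all add: a leg_11)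
          show "l (nf G x (cj 8 v d)) = l (x 8 v) * \<psi> ((d 4) * v)"
            unfolding lam_prod[OF lz] using pz by (simp add: cj_def R.l1 r k12)
        qed
      qed
    qed
  qed
  then show "\<exists>w \<in> V. inv y \<otimes> w \<otimes> y \<in> V \<and> l (inv y \<otimes> w \<otimes> y) \<noteq> l w" using d(1) by simp
qed

lemma M_12: assumes a: "a = 12"
  shows "\<forall>y \<in> carrier G - V. \<exists>w \<in> V. inv y \<otimes> w \<otimes> y \<in> V \<and> l (inv y \<otimes> w \<otimes> y) \<noteq> l w"
proof
  fix y assume y: "y \<in> carrier G - V"
  then obtain d where d: "y = nf G x d" "\<not> LZ a d" using notin_V by blast
  have nz: "d 3 \<noteq> 0 \<or> d 5 \<noteq> 0 \<or> d 6 \<noteq> 0 \<or> d 7 \<noteq> 0" using d(2) unfolding LZ_def a leg_12 by auto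
  have r: "\<And>t. l (x 12 t) = \<psi> t" using restr a by simp
  have c11: "\<And>z. l (x 11 z) = 1" by (rule lam_comm[of 1 10 11 "-1"]) (simp_all add: a leg_12 cr_def)
  have c11: "\<And>z. l (x 11 z) = 1" by (rule lam_comm[of 2 9 11 "-1"]) (simp_all add: a leg_12 cr_def)
  have c11: "\<And>z. l (x 11 z) = 1" by (rule lam_comm[of 4 8 11 "-1"]) (simp_all add: a leg_12 cr_def)
  note pz = TrueI
  have "\<exists>w \<in> V. inv (nf G x d) \<otimes> w \<otimes> nf G x d \<in> V \<and> l (inv (nf G x d) \<otimes> w \<otimes> nf G x d) \<noteq> l w"
  proof -
    show ?thesis
    proof (cases "d 3 = 0")
      case False
      then have ng: "d 3 \<noteq> 0" by simp
      obtain v where v: "\<psi> ((d 3) * v) \<noteq> 1" using pick[of "d 3"] ng by auto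
      have lz: "LZ a (cj 11 v d)" unfolding LZ_def a leg_12 using pz by (simp add: cj_def)
      show ?thesis
      proof (rule M_step[OF _ _ _ lz _ v])
        show "1 \<le> (11::nat)" "(11::nat) \<le> 12" "11 \<notin> leg a" by (simp_all add: a leg_12)
        show "l (nf G x (cj 11 v d)) = l (x 11 v) * \<psi> ((d 3) * v)"
          unfolding lam_prod[OF lz] using pz by (simp add: cj_def R.l1 r c11 c11 c11)
      qed
    next
      case True
      note pz = pz True
      show ?thesis
      proof (cases "d 5 = 0")
        case False
        then have ng: "d 5 \<noteq> 0" by simp
        obtain v where v: "\<psi> ((d 5) * v) \<noteq> 1" using pick[of "d 5"] ng by auto
        have lz: "LZ a (cj 10 v d)" unfolding LZ_def a leg_12 using pz by (simp add: cj_def)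
        show ?thesis
        proof (rule M_step[OF _ _ _ lz _ v])
          show "1 \<le> (10::nat)" "(10::nat) \<le> 12" "10 \<notin> leg a" by (simp_all add: a leg_12)
          show "l (nf G x (cj 10 v d)) = l (x 10 v) * \<psi> ((d 5) * v)"
            unfolding lam_prod[OF lz] using pz by (simp add: cj_def R.l1 r c11 c11 c11)
        qed
      next
        case True
        note pz = pz True
        show ?thesis
        proof (cases "d 6 = 0")
          case False
          then have ng: "d 6 \<noteq> 0" by simp
          obtain v where v: "\<psi> ((d 6) * v) \<noteq> 1" using pick[of "d 6"] ng by auto
          have lz: "LZ a (cj 9 v d)" unfolding LZ_def a leg_12 using pz by (simp add: cj_def)
          show ?thesis
          proof (rule M_step[OF _ _ _ lz _ v])
            show "1 \<le> (9::nat)" "(9::nat) \<le> 12" "9 \<notin> leg a" by (simp_all add: a leg_12)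
            show "l (nf G x (cj 9 v d)) = l (x 9 v) * \<psi> ((d 6) * v)"
              unfolding lam_prod[OF lz] using pz by (simp add: cj_def R.l1 r c11 c11 c11)
          qed
        next
          case True
          note pz = pz True
          have ng: "d 7 \<noteq> 0" using nz pz by auto
          obtain v where v: "\<psi> ((- d 7) * v) \<noteq> 1" using pick[of "- d 7"] ng by auto
          have lz: "LZ a (cj 8 v d)" unfolding LZ_def a leg_12 using pz by (simp add: cj_def)
          show ?thesis
          proof (rule M_step[OF _ _ _ lz _ v])
            show "1 \<le> (8::nat)" "(8::nat) \<le> 12" "8 \<notin> leg a" by (simp_all add: a leg_12)
            show "l (nf G x (cj 8 v d)) = l (x 8 v) * \<psi> ((- d 7) * v)"
              unfolding lam_prod[OF lz] using pz by (simp add: cj_def R.l1 r c11 c11 c11)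
          qed
        qed
      qed
    qed
  qed
  then show "\<exists>w \<in> V. inv y \<otimes> w \<otimes> y \<in> V \<and> l (inv y \<otimes> w \<otimes> y) \<noteq> l w" using d(1) by simp
qed


lemma M_all: "\<forall>y \<in> carrier G - V. \<exists>w \<in> V. inv y \<otimes> w \<otimes> y \<in> V \<and> l (inv y \<otimes> w \<otimes> y) \<noteq> l w"
  using set12[OF a12] M_1 M_2 M_3 M_4 M_5 M_6 M_7 M_8 M_9 M_10 M_11 M_12 by blast

lemma K_all: assumes y: "y \<in> carrier G" shows "inv y \<otimes> x a t \<otimes> y \<in> V \<and> l (inv y \<otimes> x a t \<otimes> y) = \<psi> t"
proof -
  have "a \<in> {1,2,3,4,5,6,7,8,9,10,11,12}" by (rule set12[OF a12])
  then consider "a = 1" | "a = 2" | "a = 3" | "a = 4" | "a = 5" | "a = 6" | "a = 7" | "a = 8" | "a = 9"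
     | "a = 10" | "a = 11" | "a = 12" by blast
  then show ?thesis
  proof cases
    case 1 then show ?thesis by (rule K_1[OF _ y])
  next
    case 2 then show ?thesis by (rule K_2[OF _ y])
  next
    case 3 then show ?thesis by (rule K_3[OF _ y])
  next
    case 4 then show ?thesis by (rule K_4[OF _ y])
  next
    case 5 then show ?thesis by (rule K_5[OF _ y])
  next
    case 6 then show ?thesis by (rule K_6[OF _ y])
  next
    case 7 then show ?thesis by (rule K_7[OF _ y])
  next
    case 8 then show ?thesis by (rule K_8[OF _ y])
  next
    case 9 then show ?thesis by (rule K_9[OF _ y])
  next
    case 10 then show ?thesis by (rule K_10[OF _ y])
  next
    case 11 then show ?thesis by (rule K_11[OF _ y])
  next
    case 12 then show ?thesis by (rule K_12[OF _ y])
  qed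
qed

lemma main_v: "irreducible_char G (induce G V l) \<and> (\<forall>t. induce G V l (x a t) = induce G V l \<one> * \<psi> t)
   \<and> induce G V l \<one> \<noteq> 0"
proof (intro conjI allI)
  show "irreducible_char G (induce G V l)" by (rule R.irr_char_main[OF M_all])
  fix t show "induce G V l (x a t) = induce G V l \<one> * \<psi> t"
    using a12 K_all by (intro R.induce_const) auto
next
  show "induce G V l \<one> \<noteq> 0" by (rule R.induce_one_nz)
qed

end

lemma set12g: "1 \<le> b \<Longrightarrow> b \<le> (12::nat) \<Longrightarrow> b \<in> {1,2,3,4,5,6,7,8,9,10,11,12}"
  by (simp; presburger)

lemma subgroup_all: "d4 G x \<Longrightarrow> 1 \<le> a \<Longrightarrow> a \<le> 12 \<Longrightarrow> subgroup (Vsub G x a) G"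
  using set12g d4.subgroup_V_1 d4.subgroup_V_2 d4.subgroup_V_3 d4.subgroup_V_4 d4.subgroup_V_5 d4.subgroup_V_6
    d4.subgroup_V_7 d4.subgroup_V_8 d4.subgroup_V_9 d4.subgroup_V_10 d4.subgroup_V_11 d4.subgroup_V_12
  by (metis empty_iff insert_iff)

theorem proposition3p3:
  fixes G :: "('g, 'b) monoid_scheme"
    and x :: "nat \<Rightarrow> 'a::{field,finite} \<Rightarrow> 'g"
    and \<phi> :: "'a \<Rightarrow> complex"
    and a :: nat
    and lam :: "'a \<Rightarrow> 'g \<Rightarrow> complex"
  assumes U: "is_U_D4 G x"
    and phi: "nontriv_add_char \<phi>"
    and a: "a \<in> posroots"
    and lin: "\<And>s. s \<noteq> 0 \<Longrightarrow> linear_char G (Vsub G x a) (lam s)"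
    and restr: "\<And>s t. s \<noteq> 0 \<Longrightarrow> lam s (x a t) = \<phi> (s * t)"
    and ker: "\<And>s g t. s \<noteq> 0 \<Longrightarrow> g \<in> posroots \<Longrightarrow> ht g > ht a \<Longrightarrow> lam s (x g t) = 1"
  shows "inj_on (\<lambda>s. induce G (Vsub G x a) (lam s)) {s. s \<noteq> 0}
    \<and> (\<forall>s. s \<noteq> 0 \<longrightarrow> irreducible_char G (induce G (Vsub G x a) (lam s)))
    \<and> (\<forall>s t. s \<noteq> 0 \<longrightarrow> induce G (Vsub G x a) (lam s) (x a t)
            = induce G (Vsub G x a) (lam s) \<one>\<^bsub>G\<^esub> * \<phi> (s * t))"
proof -
  have D: "d4 G x" by (rule d4.intro[OF U])
  have a12: "1 \<le> a" "a \<le> 12" using a unfolding posroots_def by auto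
  have sub: "subgroup (Vsub G x a) G" by (rule subgroup_all[OF D a12])
  have phadd: "\<And>u v. \<phi> (u + v) = \<phi> u * \<phi> v" using phi unfolding nontriv_add_char_def by blast
  have phnz: "\<And>u. \<phi> u \<noteq> 0" using phi unfolding nontriv_add_char_def by blast
  obtain b where b: "\<phi> b \<noteq> 1" using phi unfolding nontriv_add_char_def by blast
  have main: "irreducible_char G (induce G (Vsub G x a) (lam s)) \<and>
      (\<forall>t. induce G (Vsub G x a) (lam s) (x a t) = induce G (Vsub G x a) (lam s) \<one>\<^bsub>G\<^esub> * \<phi> (s * t))
      \<and> induce G (Vsub G x a) (lam s) \<one>\<^bsub>G\<^esub> \<noteq> 0" if s: "s \<noteq> 0" for s
  proof -
    have nt: "\<exists>t. \<phi> (s * t) \<noteq> 1"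
    proof
      show "\<phi> (s * (b / s)) \<noteq> 1" using s b by simp
    qed
    interpret V: d4v G x a "lam s" "\<lambda>t. \<phi> (s * t)"
      by (intro d4v.intro D d4v_axioms.intro a12 sub lin[OF s] nt restr[OF s] ker[OF s]) auto
    show ?thesis using V.main_v by simp
  qed
  have inj: "inj_on (\<lambda>s. induce G (Vsub G x a) (lam s)) {s. s \<noteq> 0}"
  proof (rule inj_onI)
    fix s s' assume s: "s \<in> {s. s \<noteq> 0}" and s': "s' \<in> {s. s \<noteq> 0}"
      and e: "induce G (Vsub G x a) (lam s) = induce G (Vsub G x a) (lam s')"
    show "s = s'"
    proof (rule ccontr)
      assume ne: "s \<noteq> s'"
      define t where "t = b / (s - s')"
      have m1: "induce G (Vsub G x a) (lam s) (x a t) = induce G (Vsub G x a) (lam s) \<one>\<^bsub>G\<^esub> * \<phi> (s * t)"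
        using main[of s] s by auto
      have m2: "induce G (Vsub G x a) (lam s') (x a t) = induce G (Vsub G x a) (lam s') \<one>\<^bsub>G\<^esub> * \<phi> (s' * t)"
        using main[of s'] s' by auto
      have nz: "induce G (Vsub G x a) (lam s) \<one>\<^bsub>G\<^esub> \<noteq> 0" using main[of s] s by auto
      have "\<phi> (s * t) = \<phi> (s' * t)" using m1 m2 e nz by simp
      moreover have "s * t = b + s' * t" unfolding t_def using ne by (simp add: field_simps)
      ultimately have "\<phi> b * \<phi> (s' * t) = \<phi> (s' * t)" using phadd by simp
      then show False using b phnz[of "s' * t"] by simp
    qed
  qed
  show ?thesis using inj main by blast
qed

end
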